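(* Consider the stationary M/M/1/K queue (queue length at time $0$ distributed according to the stationary distribution) with arrival rate $\lambda>0$, service rate $\mu>0$, $\rho=\lambda/\mu$ and capacity $K\ge1$, and let $D(t)$ be the number of departures in $[0,t]$. Then $\mathrm{Var}(D(t))=\bar v\,t+\bar b_e+o(1)$ as $t\to\infty$, where $$\bar v=\begin{cases}\lambda\,\dfrac{(1+\rho^{K+1})\big(1-(1+2K)\rho^K(1-\rho)-\rho^{2K+1}\big)}{(1-\rho^{K+1})^3}, & \rho\ne1,\\[1em] \lambda\Big(\dfrac23-\dfrac{3K+2}{3(K+1)^2}\Big), & \rho=1,\end{cases}$$ and $$\bar b_e=\begin{cases}\rho^{K+1}\dfrac{N_K(\rho)}{(1-\rho)^2(1-\rho^{K+1})^4}, & \rho\ne1,\\[1em] \dfrac{7K^4+28K^3+37K^2+18K}{180(K+1)^2}, & \rho=1,\end{cases}$$ with $$N_K(\rho)=\big[6(1+\rho^2)(1+K)^2-4\rho(1+6K+3K^2)\big]\rho^{K+1}+\rho^2(2+3K+K^2)(1+\rho^{2K})-2\rho(3+2K+K^2)(1+\rho^{2(K+1)})+K(1+K)(1+\rho^{2(K+2)}).$$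
   Context: The M/M/1/K queue: a single server, Poisson arrivals at rate $\lambda$, exponential service times with rate $\mu$, and at most $K$ customers in the system (arrivals finding $K$ customers are lost). The queue length $Q(t)$ is the birth–death chain on $\{0,\dots,K\}$ with up-rate $\lambda$ and down-rate $\mu$; its stationary distribution is $\pi_i=\frac{1-\rho}{1-\rho^{K+1}}\rho^i$ for $\rho\ne1$ and $\pi_i=\frac1{K+1}$ for $\rho=1$. $D(t)$ counts the service completions (downward jumps of $Q$) in $[0,t]$. *)

theory Defs
  imports "HOL-Probability.Probability"
begin

definition mm1k_pi :: "real \<Rightarrow> real \<Rightarrow> nat \<Rightarrow> nat \<Rightarrow> real" where
  "mm1k_pi lam mu K i =
     (let \<rho> = lam / mu in
      if i \<le> K then (if \<rho> = 1 then 1 / real (K + 1)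
                     else (1 - \<rho>) / (1 - \<rho> ^ (K + 1)) * \<rho> ^ i)
      else 0)"

definition mm1k_init :: "real \<Rightarrow> real \<Rightarrow> nat \<Rightarrow> nat pmf" where
  "mm1k_init lam mu K = embed_pmf (mm1k_pi lam mu K)"

(* One step of the uniformized jump chain of (Q, D) with uniformization rate lam + mu:
   w.p. lam/(lam+mu) an arrival attempt (lost if Q = K),
   w.p. mu/(lam+mu) a service attempt (a real departure only if Q > 0). *)
definition mm1k_step :: "real \<Rightarrow> real \<Rightarrow> nat \<Rightarrow> nat \<times> nat \<Rightarrow> (nat \<times> nat) pmf" where
  "mm1k_step lam mu K s =
     (case s of (q, d) \<Rightarrow>
       bind_pmf (bernoulli_pmf (lam / (lam + mu)))
         (\<lambda>up. return_pmf
            (if up then (if q < K then (q + 1, d) else (q, d))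
             else (if 0 < q then (q - 1, d + 1) else (q, d)))))"

definition mm1k_jump :: "real \<Rightarrow> real \<Rightarrow> nat \<Rightarrow> nat \<Rightarrow> (nat \<times> nat) pmf" where
  "mm1k_jump lam mu K n =
     ((\<lambda>p. bind_pmf p (mm1k_step lam mu K)) ^^ n) (map_pmf (\<lambda>q. (q, 0)) (mm1k_init lam mu K))"

(* Law of D(t), the number of departures in [0,t] of the stationary M/M/1/K queue:
   the number of epochs in [0,t] is Poisson((lam+mu) t) (uniformization). *)
definition mm1k_departures :: "real \<Rightarrow> real \<Rightarrow> nat \<Rightarrow> real \<Rightarrow> nat pmf" where
  "mm1k_departures lam mu K t =
     bind_pmf (poisson_pmf ((lam + mu) * t)) (\<lambda>n. map_pmf snd (mm1k_jump lam mu K n))"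

definition mm1k_vbar :: "real \<Rightarrow> real \<Rightarrow> nat \<Rightarrow> real" where
  "mm1k_vbar lam mu K =
     (let \<rho> = lam / mu in
      if \<rho> \<noteq> 1 then
        lam * ((1 + \<rho> ^ (K + 1)) * (1 - (1 + 2 * real K) * \<rho> ^ K * (1 - \<rho>) - \<rho> ^ (2 * K + 1)))
          / (1 - \<rho> ^ (K + 1)) ^ 3
      else lam * (2 / 3 - (3 * real K + 2) / (3 * (real K + 1) ^ 2)))"

definition mm1k_N :: "nat \<Rightarrow> real \<Rightarrow> real" where
  "mm1k_N K \<rho> =
     (6 * (1 + \<rho>^2) * (1 + real K)^2 - 4 * \<rho> * (1 + 6 * real K + 3 * (real K)^2)) * \<rho> ^ (K + 1)
     + \<rho>^2 * (2 + 3 * real K + (real K)^2) * (1 + \<rho> ^ (2 * K))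
     - 2 * \<rho> * (3 + 2 * real K + (real K)^2) * (1 + \<rho> ^ (2 * (K + 1)))
     + real K * (1 + real K) * (1 + \<rho> ^ (2 * (K + 2)))"

definition mm1k_be :: "real \<Rightarrow> real \<Rightarrow> nat \<Rightarrow> real" where
  "mm1k_be lam mu K =
     (let \<rho> = lam / mu in
      if \<rho> \<noteq> 1 then
        \<rho> ^ (K + 1) * mm1k_N K \<rho> / ((1 - \<rho>)^2 * (1 - \<rho> ^ (K + 1)) ^ 4)
      else (7 * (real K)^4 + 28 * (real K)^3 + 37 * (real K)^2 + 18 * real K)
             / (180 * (real K + 1)^2))"

end

theory Submission
  imports Defs "HOL-Real_Asymp.Real_Asymp"
begin


locale mm = fixes lam mu :: real and K :: nat
  assumes lam: "0 < lam" and mu: "0 < mu" and K1: "1 \<le> K"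
begin

definition "\<rho> = lam / mu"
definition "p = lam / (lam + mu)"
definition "qq = mu / (lam + mu)"
definition "\<pi> = mm1k_pi lam mu K"
definition up :: "nat \<Rightarrow> nat" where "up x = (if x < K then x + 1 else x)"
definition Pop :: "(nat \<Rightarrow> real) \<Rightarrow> nat \<Rightarrow> real" where
  "Pop f x = p * f (up x) + qq * f (x - 1)"
definition piE :: "(nat \<Rightarrow> real) \<Rightarrow> real" where "piE f = (\<Sum>x\<le>K. \<pi> x * f x)"
definition Gop :: "(nat \<Rightarrow> real) \<Rightarrow> nat \<Rightarrow> real" where
  "Gop f x = (if 0 < x then qq * f (x - 1) else 0)"
definition g :: "nat \<Rightarrow> real" where "g x = (if 0 < x then qq else 0)"
definition g' :: "nat \<Rightarrow> real" where "g' x = (if x < K then p else 0)"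

lemma div_mult_div_one: "(a::real) \<noteq> 0 \<Longrightarrow> b \<noteq> 0 \<Longrightarrow> a / b * (b / a) = 1" by simp

lemma rho_pos: "0 < \<rho>" using lam mu by (simp add: \<rho>_def)
lemma lm_pos: "0 < lam + mu" using lam mu by simp
lemma one_rho: "1 + \<rho> = (lam + mu) / mu" using mu by (simp add: \<rho>_def field_simps)
lemma lm_ne: "lam + mu \<noteq> 0" using lm_pos by simp
lemma p_eq: "p = \<rho> / (1 + \<rho>)"
proof -
  have "p * (1 + \<rho>) = lam / (lam + mu) * ((lam + mu) / mu)" by (simp only: one_rho p_def)
  also have "\<dots> = \<rho>" using mu lm_ne by (simp add: \<rho>_def)
  finally have "p * (1 + \<rho>) = \<rho>" .
  moreover have "1 + \<rho> \<noteq> 0" using rho_pos by simp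
  ultimately show ?thesis by (simp add: eq_divide_eq)
qed
lemma qq_eq: "qq = 1 / (1 + \<rho>)"
proof -
  have "qq * (1 + \<rho>) = mu / (lam + mu) * ((lam + mu) / mu)" by (simp only: one_rho qq_def)
  also have "\<dots> = 1" using mu lm_ne by simp
  finally have "qq * (1 + \<rho>) = 1" .
  moreover have "1 + \<rho> \<noteq> 0" using rho_pos by simp
  ultimately show ?thesis by (simp add: eq_divide_eq)
qed
lemma pq: "p + qq = 1" using lm_ne by (simp add: p_def qq_def add_divide_distrib[symmetric])
lemma p_pos: "0 < p" using lam mu by (simp add: p_def)
lemma qq_pos: "0 < qq" using lam mu by (simp add: qq_def)
lemma qq_lt1: "qq < 1" using pq p_pos by linarith
lemma p_qq: "p = \<rho> * qq" by (simp add: p_eq qq_eq)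

lemma pi_def2: "\<pi> x = (if x \<le> K then (if \<rho> = 1 then 1 / real (K + 1)
                     else (1 - \<rho>) / (1 - \<rho> ^ (K + 1)) * \<rho> ^ x) else 0)"
  by (simp add: \<pi>_def mm1k_pi_def \<rho>_def Let_def)

lemma rhoK_ne1: assumes "\<rho> \<noteq> 1" shows "\<rho> ^ (K + 1) \<noteq> 1"
proof
  assume "\<rho> ^ (K + 1) = 1"
  from power_eq_1_iff[OF this] have "norm \<rho> = 1" by simp
  with rho_pos assms show False by simp
qed

lemma pi_nonneg: "0 \<le> \<pi> x"
proof (cases "\<rho> = 1")
  case False
  have "0 \<le> (1 - \<rho>) / (1 - \<rho> ^ (K + 1))"
  proof (cases "\<rho> < 1")
    case True
    then have "\<rho> ^ (K + 1) < 1" using rho_pos by (simp only: Suc_eq_plus1[symmetric] power_Suc_less_one)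
    with True show ?thesis by simp
  next
    case f: False
    with False have "1 < \<rho>" by simp
    then have "1 < \<rho> ^ (K + 1)" by (intro one_less_power) simp_all
    with f show ?thesis by (simp add: divide_nonpos_neg)
  qed
  then have "0 \<le> (1 - \<rho>) / (1 - \<rho> ^ (K + 1)) * \<rho> ^ x"
    by (rule mult_nonneg_nonneg) (use rho_pos in auto)
  then show ?thesis using False by (simp only: pi_def2 if_not_P[OF False]) simp
qed (simp add: pi_def2)

lemma pi_sum: "(\<Sum>x\<le>K. \<pi> x) = 1"
proof (cases "\<rho> = 1")
  case True then show ?thesis by (simp add: pi_def2)
next
  case False
  have "(\<Sum>x\<le>K. \<pi> x) = (1 - \<rho>) / (1 - \<rho> ^ (K + 1)) * (\<Sum>x<K+1. \<rho> ^ x)"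
    using False by (simp add: pi_def2 sum_distrib_left lessThan_Suc_atMost)
  also have "\<dots> = (1 - \<rho>) / (1 - \<rho> ^ (K + 1)) * ((1 - \<rho> ^ (K + 1)) / (1 - \<rho>))"
    by (simp only: sum_gp_strict if_not_P[OF False])
  also have "\<dots> = 1" apply (rule div_mult_div_one) using False rhoK_ne1[OF False] by auto
  finally show ?thesis .
qed

lemma pi_zero: "K < x \<Longrightarrow> \<pi> x = 0" by (simp add: pi_def2)

lemma pi_prob: "(\<integral>\<^sup>+x. ennreal (\<pi> x) \<partial>count_space UNIV) = 1"
proof -
  have "(\<integral>\<^sup>+x. ennreal (\<pi> x) \<partial>count_space UNIV) = (\<Sum>x\<le>K. ennreal (\<pi> x))"
    by (rule nn_integral_count_space') (auto simp: pi_zero)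
  also have "\<dots> = ennreal (\<Sum>x\<le>K. \<pi> x)" using pi_nonneg by (simp add: sum_ennreal)
  also have "\<dots> = 1" by (simp only: pi_sum ennreal_1)
  finally show ?thesis .
qed

lemma pmf_init: "pmf (mm1k_init lam mu K) x = \<pi> x"
  unfolding mm1k_init_def \<pi>_def[symmetric]
  by (rule pmf_embed_pmf) (rule pi_nonneg, rule pi_prob)

lemma set_init: "set_pmf (mm1k_init lam mu K) \<subseteq> {..K}"
proof
  fix x assume "x \<in> set_pmf (mm1k_init lam mu K)"
  then have "\<pi> x \<noteq> 0" by (simp add: set_pmf_iff pmf_init)
  then show "x \<in> {..K}" using pi_zero by (metis atMost_iff not_le)
qed

lemma exp_init: "measure_pmf.expectation (mm1k_init lam mu K) f = (\<Sum>x\<le>K. \<pi> x * f x)"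
proof -
  have "measure_pmf.expectation (mm1k_init lam mu K) f = (\<Sum>a\<in>{..K}. pmf (mm1k_init lam mu K) a *\<^sub>R f a)"
    by (rule integral_measure_pmf) (use set_init in blast)+
  then show ?thesis by (simp add: pmf_init)
qed

end

context mm begin

definition Tr :: "(nat \<times> nat \<Rightarrow> real) \<Rightarrow> nat \<times> nat \<Rightarrow> real" where
  "Tr F s = (case s of (x, d) \<Rightarrow> p * F (up x, d) + qq * (if 0 < x then F (x - 1, d + 1) else F (x, d)))"

definition dn :: "nat \<times> nat \<Rightarrow> nat \<times> nat" where
  "dn s = (case s of (x, d) \<Rightarrow> if 0 < x then (x - 1, d + 1) else (x, d))"

lemma step_eq: "mm1k_step lam mu K (x, d) =
   bind_pmf (bernoulli_pmf p) (\<lambda>b. return_pmf (if b then (up x, d) else dn (x, d)))"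
proof -
  have "\<And>b. (if b then (if x < K then (x + 1, d) else (x, d))
             else (if 0 < x then (x - 1, d + 1) else (x, d))) = (if b then (up x, d) else dn (x, d))"
    by (simp add: up_def dn_def)
  then show ?thesis by (simp add: mm1k_step_def p_def)
qed

lemma set_step: "set_pmf (mm1k_step lam mu K (x, d)) \<subseteq> {(up x, d), dn (x, d)}"
  unfolding step_eq by (auto split: if_splits)

lemma p_le1: "p \<le> 1" using pq qq_pos by linarith

lemma step_exp: "measure_pmf.expectation (mm1k_step lam mu K (x, d)) F = Tr F (x, d)"
proof -
  have "measure_pmf.expectation (mm1k_step lam mu K (x, d)) F =
     (\<Sum>b\<in>UNIV. pmf (bernoulli_pmf p) b *\<^sub>R measure_pmf.expectation
        (return_pmf (if b then (up x, d) else dn (x, d))) F)"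
    unfolding step_eq by (rule pmf_expectation_bind) auto
  also have "\<dots> = p * F (up x, d) + (1 - p) * F (dn (x, d))"
    using p_pos p_le1 by (simp add: UNIV_bool)
  also have "\<dots> = Tr F (x, d)" using pq by (simp add: Tr_def dn_def)
  finally show ?thesis .
qed

lemma up_le: "x \<le> K \<Longrightarrow> up x \<le> K" by (simp add: up_def)

lemma jump_Suc: "mm1k_jump lam mu K (Suc n) = bind_pmf (mm1k_jump lam mu K n) (mm1k_step lam mu K)"
  by (simp only: mm1k_jump_def funpow.simps comp_apply)

lemma jump_0: "mm1k_jump lam mu K 0 = map_pmf (\<lambda>q. (q, 0)) (mm1k_init lam mu K)"
  by (simp only: mm1k_jump_def funpow.simps id_apply)

lemma set_jump: "set_pmf (mm1k_jump lam mu K n) \<subseteq> {..K} \<times> {..n}"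
proof (induction n)
  case 0
  show ?case unfolding jump_0 set_map_pmf using set_init by auto
next
  case (Suc n)
  show ?case
  proof
    fix s assume "s \<in> set_pmf (mm1k_jump lam mu K (Suc n))"
    then obtain a where a: "a \<in> set_pmf (mm1k_jump lam mu K n)" and s: "s \<in> set_pmf (mm1k_step lam mu K a)"
      unfolding jump_Suc set_bind_pmf by blast
    obtain x d where ad: "a = (x, d)" by (cases a)
    with a Suc have xd: "x \<le> K" "d \<le> n" by auto
    from s ad set_step[of x d] have "s \<in> {(up x, d), dn (x, d)}" by auto
    moreover have "up x \<le> K" using up_le xd(1) .
    moreover have "dn (x, d) \<in> {..K} \<times> {..Suc n}" using xd unfolding dn_def by auto
    ultimately show "s \<in> {..K} \<times> {..Suc n}" using xd by auto
  qed
qed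

definition En :: "nat \<Rightarrow> (nat \<times> nat \<Rightarrow> real) \<Rightarrow> real" where
  "En n F = measure_pmf.expectation (mm1k_jump lam mu K n) F"

lemma En_sum: "En n F = (\<Sum>a\<in>{..K} \<times> {..n}. pmf (mm1k_jump lam mu K n) a * F a)"
  unfolding En_def by (subst integral_measure_pmf[of "{..K} \<times> {..n}"]) (use set_jump in auto)

lemma En_Suc: "En (Suc n) F = En n (Tr F)"
proof -
  have "En (Suc n) F = (\<Sum>a\<in>{..K} \<times> {..n}. pmf (mm1k_jump lam mu K n) a *\<^sub>R
           measure_pmf.expectation (mm1k_step lam mu K a) F)"
    unfolding En_def jump_Suc
  proof (rule pmf_expectation_bind)
    fix a :: "nat \<times> nat"
    obtain x d where "a = (x, d)" by (cases a)
    then show "finite (set_pmf (mm1k_step lam mu K a))"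
      using set_step by (metis finite.emptyI finite_insert finite_subset)
  qed (use set_jump in auto)
  also have "\<dots> = (\<Sum>a\<in>{..K} \<times> {..n}. pmf (mm1k_jump lam mu K n) a * Tr F a)"
    by (intro sum.cong refl) (auto simp: step_exp)
  also have "\<dots> = En n (Tr F)" by (simp add: En_sum)
  finally show ?thesis .
qed

lemma En_0: "En 0 F = (\<Sum>x\<le>K. \<pi> x * F (x, 0))"
  unfolding En_def jump_0 by (simp add: exp_init)

lemma En_cong: "(\<And>x d. x \<le> K \<Longrightarrow> d \<le> n \<Longrightarrow> F (x, d) = F' (x, d)) \<Longrightarrow> En n F = En n F'"
  unfolding En_sum by (intro sum.cong refl) auto

lemma En_add: "En n (\<lambda>s. F s + F' s) = En n F + En n F'"
  unfolding En_sum by (simp add: sum.distrib algebra_simps)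

lemma En_cmult: "En n (\<lambda>s. c * F s) = c * En n F"
  unfolding En_sum by (simp add: sum_distrib_left algebra_simps)

lemma Pop_cong: "(\<And>y. y \<le> K \<Longrightarrow> f y = f' y) \<Longrightarrow> x \<le> K \<Longrightarrow> Pop f x = Pop f' x"
  unfolding Pop_def using up_le by simp

lemma Pop_const: "Pop (\<lambda>_. a) x = a"
proof -
  have "Pop (\<lambda>_. a) x = (p + qq) * a" unfolding Pop_def by (simp add: algebra_simps)
  then show ?thesis using pq by simp
qed

lemma Pop_lin: "Pop (\<lambda>y. a * f y + b * f' y + c) x = a * Pop f x + b * Pop f' x + c"
proof -
  have "Pop (\<lambda>y. a * f y + b * f' y + c) x = a * Pop f x + b * Pop f' x + (p + qq) * c"
    unfolding Pop_def by (simp add: algebra_simps)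
  then show ?thesis using pq by simp
qed

lemma Pop_nonneg: "(\<And>y. y \<le> K \<Longrightarrow> 0 \<le> f y) \<Longrightarrow> x \<le> K \<Longrightarrow> 0 \<le> Pop f x"
  unfolding Pop_def using up_le p_pos qq_pos by simp

lemma balance: "x < K \<Longrightarrow> \<pi> (Suc x) * qq = \<pi> x * p"
  by (cases "\<rho> = 1") (auto simp: pi_def2 p_qq)

end

context mm begin

lemma piE_cong: "(\<And>x. x \<le> K \<Longrightarrow> f x = f' x) \<Longrightarrow> piE f = piE f'"
  unfolding piE_def by (intro sum.cong refl) auto

lemma piE_add: "piE (\<lambda>x. f x + f' x) = piE f + piE f'"
  unfolding piE_def by (simp add: sum.distrib algebra_simps)

lemma piE_diff: "piE (\<lambda>x. f x - f' x) = piE f - piE f'"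
  unfolding piE_def by (simp add: sum_subtractf algebra_simps)

lemma piE_cmult: "piE (\<lambda>x. c * f x) = c * piE f"
  unfolding piE_def by (simp add: sum_distrib_left algebra_simps)

lemma piE_const: "piE (\<lambda>x. c) = c"
  unfolding piE_def by (simp add: sum_distrib_right[symmetric] pi_sum)

lemma K_Suc: obtains K' where "K = Suc K'" using K1 by (cases K) auto

lemma sum_shift: "(\<Sum>x\<le>K. F x) = F 0 + (\<Sum>x<K. F (Suc x))"
proof -
  obtain K' where KK: "K = Suc K'" using K_Suc by blast
  show ?thesis unfolding KK lessThan_Suc_atMost by (rule sum.atMost_Suc_shift)
qed

lemma sym_form: "piE (\<lambda>x. a x * Pop b x) =
   (\<Sum>x<K. \<pi> x * p * (a x * b (Suc x) + a (Suc x) * b x)) + \<pi> K * p * a K * b K + \<pi> 0 * qq * a 0 * b 0"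
proof -
  obtain K' where KK: "K = Suc K'" using K_Suc by blast
  have up_lt: "x < K \<Longrightarrow> up x = Suc x" for x by (simp add: up_def)
  have upK: "up K = K" by (simp add: up_def)
  have "piE (\<lambda>x. a x * Pop b x) = (\<Sum>x\<le>K. \<pi> x * a x * p * b (up x)) + (\<Sum>x\<le>K. \<pi> x * a x * qq * b (x - 1))"
    unfolding piE_def Pop_def by (simp add: sum.distrib algebra_simps)
  also have "(\<Sum>x\<le>K. \<pi> x * a x * p * b (up x)) = (\<Sum>x<K. \<pi> x * p * (a x * b (Suc x))) + \<pi> K * p * a K * b K"
  proof -
    have "(\<Sum>x\<le>K. \<pi> x * a x * p * b (up x)) = (\<Sum>x<K. \<pi> x * a x * p * b (up x)) + \<pi> K * a K * p * b (up K)"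
      by (simp add: lessThan_Suc_atMost[symmetric])
    also have "(\<Sum>x<K. \<pi> x * a x * p * b (up x)) = (\<Sum>x<K. \<pi> x * p * (a x * b (Suc x)))"
      by (intro sum.cong refl) (simp add: up_lt)
    finally show ?thesis by (simp add: upK)
  qed
  also have "(\<Sum>x\<le>K. \<pi> x * a x * qq * b (x - 1)) = (\<Sum>x<K. \<pi> x * p * (a (Suc x) * b x)) + \<pi> 0 * qq * a 0 * b 0"
  proof -
    have "(\<Sum>x\<le>K. \<pi> x * a x * qq * b (x - 1)) = \<pi> 0 * a 0 * qq * b 0 + (\<Sum>x\<le>K'. \<pi> (Suc x) * a (Suc x) * qq * b x)"
      unfolding KK by (subst sum.atMost_Suc_shift) simp
    also have "(\<Sum>x\<le>K'. \<pi> (Suc x) * a (Suc x) * qq * b x) = (\<Sum>x<K. \<pi> x * p * (a (Suc x) * b x))"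
    proof -
      have "(\<Sum>x\<le>K'. \<pi> (Suc x) * a (Suc x) * qq * b x) = (\<Sum>x<K. \<pi> (Suc x) * qq * (a (Suc x) * b x))"
        unfolding KK lessThan_Suc_atMost by (simp add: algebra_simps)
      also have "\<dots> = (\<Sum>x<K. \<pi> x * p * (a (Suc x) * b x))"
        by (intro sum.cong refl) (simp add: balance)
      finally show ?thesis .
    qed
    finally show ?thesis by (simp add: algebra_simps)
  qed
  finally show ?thesis by (simp add: sum.distrib algebra_simps)
qed

lemma Pop_rev: "piE (\<lambda>x. a x * Pop b x) = piE (\<lambda>x. Pop a x * b x)"
proof -
  have "piE (\<lambda>x. Pop a x * b x) = piE (\<lambda>x. b x * Pop a x)" by (simp add: mult.commute)
  also have "\<dots> = piE (\<lambda>x. a x * Pop b x)" unfolding sym_form by (simp add: algebra_simps)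
  finally show ?thesis by simp
qed

lemma piE_Pop: "piE (Pop f) = piE f"
  using Pop_rev[of "\<lambda>_. 1" f] by (simp add: Pop_const)

lemma piE_Pow: "piE ((Pop ^^ n) f) = piE f"
  by (induction n) (simp_all add: piE_Pop)

lemma piE_Gop: "piE (Gop f) = piE (\<lambda>x. g' x * f x)"
proof -
  obtain K' where KK: "K = Suc K'" using K_Suc by blast
  have "piE (Gop f) = (\<Sum>x<K. \<pi> (Suc x) * (qq * f x))"
    unfolding piE_def by (subst sum_shift) (simp add: Gop_def)
  also have "\<dots> = (\<Sum>x<K. \<pi> x * p * f x)"
    by (intro sum.cong refl) (metis balance lessThan_iff mult.assoc)
  also have "\<dots> = piE (\<lambda>x. g' x * f x)"
    unfolding piE_def g'_def by (simp add: lessThan_Suc_atMost[symmetric] algebra_simps)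
  finally show ?thesis .
qed

lemma Tr_fst: "Tr (\<lambda>s. f (fst s)) = (\<lambda>s. Pop f (fst s))"
proof
  fix s :: "nat \<times> nat" obtain x d where "s = (x, d)" by (cases s)
  then show "Tr (\<lambda>s. f (fst s)) s = Pop f (fst s)" by (simp add: Tr_def Pop_def)
qed

lemma Tr_snd: "Tr (\<lambda>s. real (snd s) * f (fst s)) = (\<lambda>s. real (snd s) * Pop f (fst s) + Gop f (fst s))"
proof
  fix s :: "nat \<times> nat" obtain x d where "s = (x, d)" by (cases s)
  then show "Tr (\<lambda>s. real (snd s) * f (fst s)) s = real (snd s) * Pop f (fst s) + Gop f (fst s)"
    by (simp add: Tr_def Pop_def Gop_def algebra_simps)
qed

lemma Tr_snd2: "Tr (\<lambda>s. real (snd s) ^ 2) = (\<lambda>s. real (snd s) ^ 2 + 2 * (real (snd s) * g (fst s)) + g (fst s))"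
proof
  fix s :: "nat \<times> nat" obtain x d where sd: "s = (x, d)" by (cases s)
  have "p * real d ^ 2 + qq * real d ^ 2 = real d ^ 2" using pq by (metis distrib_right mult_1)
  then show "Tr (\<lambda>s. real (snd s) ^ 2) s = real (snd s) ^ 2 + 2 * (real (snd s) * g (fst s)) + g (fst s)"
    unfolding sd by (auto simp: Tr_def g_def power2_eq_square algebra_simps)
qed

lemma A_mom: "En n (\<lambda>s. f (fst s)) = piE f"
proof (induction n arbitrary: f)
  case 0 then show ?case by (simp add: En_0 piE_def)
next
  case (Suc n) then show ?case by (simp add: En_Suc Tr_fst piE_Pop)
qed

lemma B_mom: "En n (\<lambda>s. real (snd s) * f (fst s)) = (\<Sum>j<n. piE (Gop ((Pop ^^ j) f)))"
proof (induction n arbitrary: f)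
  case 0 then show ?case by (simp add: En_0)
next
  case (Suc n)
  have "En (Suc n) (\<lambda>s. real (snd s) * f (fst s)) = En n (\<lambda>s. real (snd s) * Pop f (fst s)) + piE (Gop f)"
    by (simp add: En_Suc Tr_snd En_add A_mom)
  also have "\<dots> = (\<Sum>j<n. piE (Gop ((Pop ^^ Suc j) f))) + piE (Gop f)"
    by (simp add: Suc funpow_Suc_right del: funpow.simps)
  also have "\<dots> = (\<Sum>j<Suc n. piE (Gop ((Pop ^^ j) f)))"
    by (simp only: sum.lessThan_Suc_shift funpow_0 add.commute)
  finally show ?case .
qed

lemma C_mom: "En (Suc n) (\<lambda>s. real (snd s) ^ 2) = En n (\<lambda>s. real (snd s) ^ 2)
    + 2 * En n (\<lambda>s. real (snd s) * g (fst s)) + piE g"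
  by (simp add: En_Suc Tr_snd2 En_add En_cmult A_mom)

lemma C_0: "En 0 (\<lambda>s. real (snd s) ^ 2) = 0" by (simp add: En_0)

lemma Gop_one: "Gop (\<lambda>_. 1) = g" by (simp add: Gop_def g_def fun_eq_iff)

lemma Pop_const_fun: "Pop (\<lambda>_. a) = (\<lambda>_. a)" by (simp add: fun_eq_iff Pop_const)

lemma Pow_const: "(Pop ^^ j) (\<lambda>_. a) = (\<lambda>_. a)"
  by (induction j) (simp_all add: Pop_const_fun)

definition "c = piE g"

lemma D_mean: "En n (\<lambda>s. real (snd s)) = real n * c"
  using B_mom[of n "\<lambda>_. 1"] by (simp add: Pow_const Gop_one c_def)

end


locale mmh = mm + fixes h h' :: "nat \<Rightarrow> real"
  assumes hP: "\<And>x. x \<le> K \<Longrightarrow> h x - Pop h x = g x - c"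
  and hP': "\<And>x. x \<le> K \<Longrightarrow> h' x - Pop h' x = g' x - c"
begin

lemma step_id: "piE (\<lambda>x. g' x * f x) = c * piE f + piE (\<lambda>x. h' x * f x) - piE (\<lambda>x. h' x * Pop f x)"
proof -
  have "piE (\<lambda>x. g' x * f x) = piE (\<lambda>x. (c * f x + h' x * f x) - Pop h' x * f x)"
  proof (rule piE_cong)
    fix x assume "x \<le> K"
    then have e: "g' x = c + h' x - Pop h' x" using hP'[of x] by simp
    show "g' x * f x = (c * f x + h' x * f x) - Pop h' x * f x" unfolding e by (simp add: algebra_simps)
  qed
  also have "\<dots> = c * piE f + piE (\<lambda>x. h' x * f x) - piE (\<lambda>x. Pop h' x * f x)"
    by (simp add: piE_diff piE_add piE_cmult)
  also have "piE (\<lambda>x. Pop h' x * f x) = piE (\<lambda>x. h' x * Pop f x)" by (rule Pop_rev[symmetric])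
  finally show ?thesis .
qed

lemma Pow_Suc: "(Pop ^^ Suc n) f = Pop ((Pop ^^ n) f)" by simp

lemma iter_g: "x \<le> K \<Longrightarrow> (Pop ^^ n) g x = c + (Pop ^^ n) h x - (Pop ^^ Suc n) h x"
proof (induction n arbitrary: x)
  case 0 then show ?case using hP[of x] by simp
next
  case (Suc n)
  have "(Pop ^^ Suc n) g x = Pop ((Pop ^^ n) g) x" by simp
  also have "\<dots> = Pop (\<lambda>y. 1 * (Pop ^^ n) h y + (-1) * (Pop ^^ Suc n) h y + c) x"
    by (rule Pop_cong) (use Suc in auto)
  also have "\<dots> = c + (Pop ^^ Suc n) h x - (Pop ^^ Suc (Suc n)) h x"
    by (simp only: Pop_lin Pow_Suc)
  finally show ?case .
qed

lemma piE_g: "piE g = c" by (simp add: c_def)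

lemma Bg: "En n (\<lambda>s. real (snd s) * g (fst s)) = real n * c ^ 2 + piE (\<lambda>x. h' x * g x) - piE (\<lambda>x. h' x * (Pop ^^ n) g x)"
proof (induction n)
  case 0 then show ?case by (simp add: En_0)
next
  case (Suc n)
  have "En (Suc n) (\<lambda>s. real (snd s) * g (fst s)) = En n (\<lambda>s. real (snd s) * g (fst s)) + piE (Gop ((Pop ^^ n) g))"
    by (simp only: B_mom sum.lessThan_Suc)
  also have "piE (Gop ((Pop ^^ n) g)) = c * c + piE (\<lambda>x. h' x * (Pop ^^ n) g x) - piE (\<lambda>x. h' x * (Pop ^^ Suc n) g x)"
    by (simp only: piE_Gop step_id piE_Pow piE_g Pow_Suc)
  finally show ?case using Suc by (simp add: power2_eq_square algebra_simps)
qed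

lemma hg_iter: "piE (\<lambda>x. h' x * (Pop ^^ n) g x) = c * piE h' + piE (\<lambda>x. h' x * (Pop ^^ n) h x) - piE (\<lambda>x. h' x * (Pop ^^ Suc n) h x)"
proof -
  have "piE (\<lambda>x. h' x * (Pop ^^ n) g x) = piE (\<lambda>x. c * h' x + h' x * (Pop ^^ n) h x - h' x * (Pop ^^ Suc n) h x)"
    by (rule piE_cong) (simp only: iter_g algebra_simps)
  then show ?thesis by (simp only: piE_diff piE_add piE_cmult)
qed

definition "\<alpha> = c + 2 * piE (\<lambda>x. h' x * g x) - 2 * c * piE h'"
definition R :: "nat \<Rightarrow> real" where "R n = piE (\<lambda>x. h' x * (Pop ^^ n) h x)"

lemma C_closed: "En n (\<lambda>s. real (snd s) ^ 2) = c ^ 2 * real n * (real n - 1) + real n * \<alpha> - 2 * R 0 + 2 * R n"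
proof (induction n)
  case 0 then show ?case by (simp add: C_0)
next
  case (Suc n)
  have "En (Suc n) (\<lambda>s. real (snd s) ^ 2) = En n (\<lambda>s. real (snd s) ^ 2)
    + 2 * (real n * c ^ 2 + piE (\<lambda>x. h' x * g x) - (c * piE h' + R n - R (Suc n))) + c"
    by (simp only: C_mom Bg hg_iter R_def piE_g)
  then show ?case using Suc by (simp add: \<alpha>_def power2_eq_square algebra_simps)
qed

end


context mm begin

definition spread :: "(nat \<Rightarrow> real) \<Rightarrow> real \<Rightarrow> bool" where
  "spread f s \<longleftrightarrow> (\<forall>x y. x \<le> K \<longrightarrow> y \<le> K \<longrightarrow> f x - f y \<le> s)"

lemma Pow_nonneg: "(\<And>y. y \<le> K \<Longrightarrow> 0 \<le> f y) \<Longrightarrow> x \<le> K \<Longrightarrow> 0 \<le> (Pop ^^ n) f x"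
proof (induction n arbitrary: x)
  case 0 then show ?case by simp
next
  case (Suc n)
  have "0 \<le> Pop ((Pop ^^ n) f) x" by (rule Pop_nonneg) (use Suc in auto)
  then show ?case by simp
qed

lemma doeblin: "(\<And>y. y \<le> K \<Longrightarrow> 0 \<le> f y) \<Longrightarrow> x \<le> K \<Longrightarrow> x \<le> n \<Longrightarrow> qq ^ n * f 0 \<le> (Pop ^^ n) f x"
proof (induction n arbitrary: x)
  case 0 then show ?case by simp
next
  case (Suc n)
  have xm: "x - 1 \<le> K" "x - 1 \<le> n" using Suc.prems by auto
  have ih: "qq ^ n * f 0 \<le> (Pop ^^ n) f (x - 1)" by (rule Suc.IH) (use Suc.prems xm in auto)
  have nn: "0 \<le> (Pop ^^ n) f (up x)" by (rule Pow_nonneg) (use Suc.prems(1) up_le[OF Suc.prems(2)] in auto)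
  have "(Pop ^^ Suc n) f x = p * (Pop ^^ n) f (up x) + qq * (Pop ^^ n) f (x - 1)"
    by (simp add: Pop_def)
  moreover have "qq * (qq ^ n * f 0) \<le> qq * (Pop ^^ n) f (x - 1)"
    using ih qq_pos by (intro mult_left_mono) auto
  moreover have "0 \<le> p * (Pop ^^ n) f (up x)" using nn p_pos by simp
  ultimately show ?case by simp
qed

lemma Pop_aff: "Pop (\<lambda>y. a * f y + b) = (\<lambda>x. a * Pop f x + b)"
proof
  fix x
  have "Pop (\<lambda>y. a * f y + b) x = a * Pop f x + (p + qq) * b" unfolding Pop_def by (simp add: algebra_simps)
  then show "Pop (\<lambda>y. a * f y + b) x = a * Pop f x + b" using pq by simp
qed

lemma Pow_aff: "(Pop ^^ n) (\<lambda>y. a * f y + b) = (\<lambda>x. a * (Pop ^^ n) f x + b)"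
  by (induction n) (simp_all add: Pop_aff)

lemma spread_Pop: "spread f s \<Longrightarrow> spread (Pop f) s"
  unfolding spread_def
proof (intro allI impI)
  fix x y assume sp: "\<forall>x y. x \<le> K \<longrightarrow> y \<le> K \<longrightarrow> f x - f y \<le> s" and xy: "x \<le> K" "y \<le> K"
  have a: "f (up x) - f (up y) \<le> s" using sp up_le[OF xy(1)] up_le[OF xy(2)] by blast
  have b: "f (x - 1) - f (y - 1) \<le> s" using sp xy by simp
  have "Pop f x - Pop f y = p * (f (up x) - f (up y)) + qq * (f (x - 1) - f (y - 1))"
    unfolding Pop_def by (simp add: algebra_simps)
  also have "\<dots> \<le> p * s + qq * s"
    using a b p_pos qq_pos by (intro add_mono mult_left_mono) auto
  also have "\<dots> = s" using pq by (metis distrib_right mult_1)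
  finally show "Pop f x - Pop f y \<le> s" .
qed

lemma spread_Pow: "spread f s \<Longrightarrow> spread ((Pop ^^ n) f) s"
  by (induction n) (simp_all add: spread_Pop)

lemma contract: assumes "spread f s" shows "spread ((Pop ^^ K) f) ((1 - qq ^ K) * s)"
  unfolding spread_def
proof (intro allI impI)
  fix x y assume xy: "x \<le> K" "y \<le> K"
  define M where "M = Max (f ` {..K})"
  define m where "m = Min (f ` {..K})"
  have fin: "finite (f ` {..K})" "f ` {..K} \<noteq> {}" by auto
  have Mf: "\<And>z. z \<le> K \<Longrightarrow> f z \<le> M" unfolding M_def using fin by (intro Max_ge) auto
  have mf: "\<And>z. z \<le> K \<Longrightarrow> m \<le> f z" unfolding m_def using fin by (intro Min_le) auto
  have "M \<in> f ` {..K}" unfolding M_def by (rule Max_in[OF fin])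
  then obtain a where a: "a \<le> K" "M = f a" by auto
  have "m \<in> f ` {..K}" unfolding m_def by (rule Min_in[OF fin])
  then obtain b where b: "b \<le> K" "m = f b" by auto
  have Mm: "M - m \<le> s" using assms a b unfolding spread_def by auto
  have d1: "qq ^ K * ((-1) * f 0 + M) \<le> (Pop ^^ K) (\<lambda>z. (-1) * f z + M) x"
    by (rule doeblin) (use Mf xy in auto)
  have d2: "qq ^ K * (1 * f 0 + (-m)) \<le> (Pop ^^ K) (\<lambda>z. 1 * f z + (-m)) y"
    by (rule doeblin) (use mf xy in auto)
  from d1 d2 have "(Pop ^^ K) f x - (Pop ^^ K) f y \<le> (1 - qq ^ K) * (M - m)"
    unfolding Pow_aff by (simp add: algebra_simps)
  also have "\<dots> \<le> (1 - qq ^ K) * s"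
    using Mm qq_pos qq_lt1 by (intro mult_left_mono) (auto simp: power_le_one)
  finally show "(Pop ^^ K) f x - (Pop ^^ K) f y \<le> (1 - qq ^ K) * s" .
qed

lemma spread_iter: "spread f s \<Longrightarrow> spread ((Pop ^^ (k * K + j)) f) ((1 - qq ^ K) ^ k * s)"
proof (induction k)
  case 0 then show ?case by (simp add: spread_Pow)
next
  case (Suc k)
  have "Suc k * K + j = K + (k * K + j)" by simp
  then have "(Pop ^^ (Suc k * K + j)) f = (Pop ^^ K) ((Pop ^^ (k * K + j)) f)"
    by (simp only: funpow_add comp_apply)
  then show ?case using contract[OF Suc.IH[OF Suc.prems]] by (simp add: algebra_simps)
qed

lemma spread_n: "spread f s \<Longrightarrow> spread ((Pop ^^ n) f) ((1 - qq ^ K) ^ (n div K) * s)"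
  using spread_iter[of f s "n div K" "n mod K"] by simp

lemma spread_dev: assumes "spread F s" "x \<le> K" shows "\<bar>F x - piE F\<bar> \<le> s"
proof -
  have "(\<Sum>y\<le>K. \<pi> y * (F x - F y)) = F x * (\<Sum>y\<le>K. \<pi> y) - piE F"
    unfolding piE_def by (simp add: algebra_simps sum_subtractf sum_distrib_left)
  then have e: "F x - piE F = (\<Sum>y\<le>K. \<pi> y * (F x - F y))" by (simp add: pi_sum)
  have up: "(\<Sum>y\<le>K. \<pi> y * (F x - F y)) \<le> (\<Sum>y\<le>K. \<pi> y * s)"
    using assms pi_nonneg unfolding spread_def by (intro sum_mono mult_left_mono) auto
  have lo: "-s \<le> F x - F y" if "y \<le> K" for y
  proof -
    have "F y - F x \<le> s" using assms that unfolding spread_def by blast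
    then show ?thesis by linarith
  qed
  have lo2: "(\<Sum>y\<le>K. \<pi> y * (F x - F y)) \<ge> (\<Sum>y\<le>K. \<pi> y * (-s))"
    using lo pi_nonneg by (intro sum_mono mult_left_mono) auto
  have e1: "(\<Sum>y\<le>K. \<pi> y * s) = s" by (simp only: sum_distrib_right[symmetric] pi_sum mult_1)
  have e2: "(\<Sum>y\<le>K. \<pi> y * (-s)) = -s" by (simp only: sum_distrib_right[symmetric] pi_sum mult_1)
  show ?thesis unfolding e using up lo2 e1 e2 by linarith
qed

lemma spread_any: "spread f (2 * (\<Sum>z\<le>K. \<bar>f z\<bar>))"
  unfolding spread_def
proof (intro allI impI)
  fix x y assume "x \<le> K" "y \<le> K"
  then have "\<bar>f x\<bar> \<le> (\<Sum>z\<le>K. \<bar>f z\<bar>)" "\<bar>f y\<bar> \<le> (\<Sum>z\<le>K. \<bar>f z\<bar>)"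
    by (auto intro!: member_le_sum)
  then show "f x - f y \<le> 2 * (\<Sum>z\<le>K. \<bar>f z\<bar>)" by linarith
qed

definition "\<gamma> = 1 - qq ^ K"
definition "\<beta> = root K \<gamma>"

lemma gamma_bounds: "0 < \<gamma>" "\<gamma> < 1"
proof -
  have "qq ^ K < 1" using qq_pos qq_lt1 K1 by (simp add: power_less_one_iff)
  moreover have "0 < qq ^ K" using qq_pos by simp
  ultimately show "0 < \<gamma>" "\<gamma> < 1" unfolding \<gamma>_def by auto
qed

lemma beta_bounds: "0 < \<beta>" "\<beta> < 1" "\<beta> ^ K = \<gamma>"
  using gamma_bounds K1 unfolding \<beta>_def by (auto simp: real_root_pow_pos2)

lemma gamma_pow: "\<gamma> ^ (n div K) \<le> \<beta> ^ n / \<gamma>"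
proof -
  have "\<gamma> ^ (n div K) = \<beta> ^ (K * (n div K))" by (simp add: power_mult beta_bounds)
  also have "\<dots> = \<beta> ^ (K * (n div K) + K) / \<gamma>"
    using beta_bounds gamma_bounds by (simp add: power_add)
  also have "\<dots> \<le> \<beta> ^ n / \<gamma>"
  proof -
    have "n \<le> K * (n div K) + K"
    proof -
      have "n mod K < K" using K1 by simp
      moreover have "K * (n div K) + n mod K = n" by (rule mult_div_mod_eq)
      ultimately show ?thesis by linarith
    qed
    then have "\<beta> ^ (K * (n div K) + K) \<le> \<beta> ^ n" using beta_bounds by (intro power_decreasing) auto
    then show ?thesis using gamma_bounds by (simp add: divide_right_mono)
  qed
  finally show ?thesis .
qed

end

context mmh begin

lemma R_bound: "\<bar>R n - piE h' * piE h\<bar> \<le> (piE (\<lambda>x. \<bar>h' x\<bar>) * (2 * (\<Sum>z\<le>K. \<bar>h z\<bar>)) / \<gamma>) * \<beta> ^ n"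
proof -
  define s where "s = 2 * (\<Sum>z\<le>K. \<bar>h z\<bar>)"
  have s0: "0 \<le> s" unfolding s_def by (simp add: sum_nonneg)
  have sp: "spread ((Pop ^^ n) h) (\<gamma> ^ (n div K) * s)"
    unfolding \<gamma>_def s_def by (rule spread_n) (rule spread_any)
  have dev: "\<bar>(Pop ^^ n) h x - piE h\<bar> \<le> \<gamma> ^ (n div K) * s" if "x \<le> K" for x
    using spread_dev[OF sp that] by (simp add: piE_Pow)
  have eqR: "R n - piE h' * piE h = piE (\<lambda>x. h' x * ((Pop ^^ n) h x - piE h))"
  proof -
    have "piE (\<lambda>x. h' x * piE h) = piE h * piE h'" using piE_cmult[of "piE h" h'] by (simp add: mult.commute)
    then show ?thesis unfolding R_def by (simp add: right_diff_distrib piE_diff mult.commute)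
  qed
  have pt: "\<bar>\<pi> x * (h' x * ((Pop ^^ n) h x - piE h))\<bar> \<le> \<pi> x * (\<bar>h' x\<bar> * (\<gamma> ^ (n div K) * s))"
    if "x \<in> {..K}" for x
  proof -
    from that have d: "\<bar>(Pop ^^ n) h x - piE h\<bar> \<le> \<gamma> ^ (n div K) * s" using dev by simp
    have "\<bar>\<pi> x * (h' x * ((Pop ^^ n) h x - piE h))\<bar> = \<pi> x * (\<bar>h' x\<bar> * \<bar>(Pop ^^ n) h x - piE h\<bar>)"
      using pi_nonneg[of x] by (simp add: abs_mult)
    also have "\<dots> \<le> \<pi> x * (\<bar>h' x\<bar> * (\<gamma> ^ (n div K) * s))"
      by (intro mult_left_mono d pi_nonneg abs_ge_zero)
    finally show ?thesis .
  qed
  have "\<bar>R n - piE h' * piE h\<bar> \<le> (\<Sum>x\<le>K. \<bar>\<pi> x * (h' x * ((Pop ^^ n) h x - piE h))\<bar>)"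
    unfolding eqR by (simp only: piE_def sum_abs)
  also have "\<dots> \<le> (\<Sum>x\<le>K. \<pi> x * (\<bar>h' x\<bar> * (\<gamma> ^ (n div K) * s)))"
    by (rule sum_mono) (rule pt)
  also have "\<dots> = piE (\<lambda>x. \<bar>h' x\<bar> * (\<gamma> ^ (n div K) * s))" by (simp add: piE_def)
  also have "\<dots> = piE (\<lambda>x. \<bar>h' x\<bar>) * (\<gamma> ^ (n div K) * s)"
    using piE_cmult[of "\<gamma> ^ (n div K) * s" "\<lambda>x. \<bar>h' x\<bar>"] by (simp only: mult.commute)
  also have "\<dots> \<le> piE (\<lambda>x. \<bar>h' x\<bar>) * (\<beta> ^ n / \<gamma> * s)"
  proof -
    have "0 \<le> piE (\<lambda>x. \<bar>h' x\<bar>)" unfolding piE_def using pi_nonneg by (simp add: sum_nonneg)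
    then show ?thesis using gamma_pow s0 by (intro mult_left_mono mult_right_mono) auto
  qed
  finally show ?thesis by (simp add: s_def algebra_simps)
qed

end


definition pois :: "real \<Rightarrow> nat \<Rightarrow> real" where "pois L n = L ^ n / fact n * exp (- L)"

lemma exp_ser: "(\<lambda>n. x ^ n / fact n) sums exp (x::real)"
  using exp_converges[of x] by (simp add: divide_inverse mult.commute)

lemma pois_nonneg: "0 \<le> L \<Longrightarrow> 0 \<le> pois L n" by (simp add: pois_def)

lemma ps0: "(\<lambda>n. pois L n) sums 1"
proof -
  have "(\<lambda>n. L ^ n / fact n * exp (- L)) sums (exp L * exp (- L))"
    by (rule sums_mult2) (rule exp_ser)
  then show ?thesis by (simp add: pois_def exp_minus)
qed

lemma fact_aux: "real (Suc n) * (L ^ Suc n / fact (Suc n)) = L * (L ^ n / fact n)"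
proof -
  have "L ^ Suc n / fact (Suc n) = (L / real (Suc n)) * (L ^ n / fact n)"
    by (simp only: fact_Suc power_Suc times_divide_times_eq)
  then show ?thesis by simp
qed

lemma ps1: "(\<lambda>n. real n * pois L n) sums L"
proof -
  have "(\<lambda>n. L * pois L n) sums (L * 1)" by (rule sums_mult) (rule ps0)
  moreover have "(\<lambda>n. real (Suc n) * pois L (Suc n)) = (\<lambda>n. L * pois L n)"
  proof
    fix n
    have "real (Suc n) * pois L (Suc n) = (real (Suc n) * (L ^ Suc n / fact (Suc n))) * exp (- L)"
      by (simp add: pois_def)
    also have "\<dots> = L * pois L n" by (simp only: fact_aux) (simp add: pois_def)
    finally show "real (Suc n) * pois L (Suc n) = L * pois L n" .
  qed
  ultimately have "(\<lambda>n. real (Suc n) * pois L (Suc n)) sums L" by simp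
  then show ?thesis by (subst (asm) sums_Suc_iff) simp
qed

lemma ps2: "(\<lambda>n. real n * (real n - 1) * pois L n) sums L ^ 2"
proof -
  have "(\<lambda>n. L ^ 2 * pois L n) sums (L ^ 2 * 1)" by (rule sums_mult) (rule ps0)
  moreover have "(\<lambda>n. real (Suc (Suc n)) * (real (Suc (Suc n)) - 1) * pois L (Suc (Suc n))) = (\<lambda>n. L ^ 2 * pois L n)"
  proof
    fix n
    have "real (Suc (Suc n)) * (real (Suc (Suc n)) - 1) * pois L (Suc (Suc n)) =
      real (Suc n) * ((real (Suc (Suc n)) * (L ^ Suc (Suc n) / fact (Suc (Suc n))))) * exp (- L)"
      by (simp add: pois_def)
    also have "\<dots> = L * (real (Suc n) * (L ^ Suc n / fact (Suc n))) * exp (- L)"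
    proof -
      have A: "real (Suc (Suc n)) * (L ^ Suc (Suc n) / fact (Suc (Suc n))) = L * (L ^ Suc n / fact (Suc n))"
        by (rule fact_aux)
      show ?thesis unfolding A by (simp only: ac_simps)
    qed
    also have "\<dots> = L ^ 2 * pois L n"
      by (subst fact_aux) (simp add: pois_def power2_eq_square)
    finally show "real (Suc (Suc n)) * (real (Suc (Suc n)) - 1) * pois L (Suc (Suc n)) = L ^ 2 * pois L n" .
  qed
  ultimately have "(\<lambda>n. real (Suc (Suc n)) * (real (Suc (Suc n)) - 1) * pois L (Suc (Suc n))) sums L ^ 2" by simp
  then have "(\<lambda>n. real (Suc n) * (real (Suc n) - 1) * pois L (Suc n)) sums L ^ 2"
    by (subst (asm) sums_Suc_iff) simp
  then show ?thesis by (subst (asm) sums_Suc_iff) simp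
qed

lemma psb: "(\<lambda>n. b ^ n * pois L n) sums (exp (L * b) * exp (- L))"
proof -
  have "(\<lambda>n. (L * b) ^ n / fact n * exp (- L)) sums (exp (L * b) * exp (- L))"
    by (rule sums_mult2) (rule exp_ser)
  then show ?thesis by (simp add: pois_def power_mult_distrib field_simps)
qed

context mm begin

lemma En_nonneg: "(\<And>s. 0 \<le> F s) \<Longrightarrow> 0 \<le> En n F"
  unfolding En_def by (rule integral_nonneg_AE) auto

lemma fin_jump: "finite (set_pmf (mm1k_jump lam mu K n))"
proof -
  have "finite ({..K} \<times> {..n})" by simp
  then show ?thesis using set_jump finite_subset by blast
qed

lemma fin_snd: "finite (set_pmf (map_pmf snd (mm1k_jump lam mu K n)))"
proof -
  have "finite ({..K} \<times> {..n})" by simp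
  then have "finite (set_pmf (mm1k_jump lam mu K n))" using set_jump finite_subset by blast
  then show ?thesis by simp
qed

lemma dep_integral:
  fixes f :: "nat \<Rightarrow> real"
  assumes t: "0 < t" and f0: "\<And>x. 0 \<le> f x"
    and S: "(\<lambda>n. pois ((lam + mu) * t) n * En n (\<lambda>s. f (snd s))) sums S"
  shows "integrable (measure_pmf (mm1k_departures lam mu K t)) f"
    and "measure_pmf.expectation (mm1k_departures lam mu K t) f = S"
proof -
  define L where "L = (lam + mu) * t"
  have L: "0 < L" unfolding L_def using t lm_pos by simp
  have inner: "(\<integral>\<^sup>+y. ennreal (f (snd y)) \<partial>mm1k_jump lam mu K n) = ennreal (En n (\<lambda>s. f (snd s)))" for n
    unfolding En_def
    by (rule nn_integral_eq_integral) (auto intro: integrable_measure_pmf_finite[OF fin_jump] simp: f0)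
  have Snn: "\<And>n. 0 \<le> pois L n * En n (\<lambda>s. f (snd s))"
    using L f0 by (intro mult_nonneg_nonneg pois_nonneg En_nonneg) auto
  have "(\<integral>\<^sup>+x. ennreal (f x) \<partial>mm1k_departures lam mu K t) =
        (\<integral>\<^sup>+n. ennreal (En n (\<lambda>s. f (snd s))) \<partial>poisson_pmf L)"
    unfolding mm1k_departures_def L_def[symmetric] by (simp add: inner)
  also have "\<dots> = (\<integral>\<^sup>+n. ennreal (pmf (poisson_pmf L) n) * ennreal (En n (\<lambda>s. f (snd s))) \<partial>count_space UNIV)"
    by (rule nn_integral_measure_pmf)
  also have "\<dots> = (\<Sum>n. ennreal (pois L n * En n (\<lambda>s. f (snd s))))"
  proof -
    have "ennreal (pmf (poisson_pmf L) n) * ennreal (En n (\<lambda>s. f (snd s))) = ennreal (pois L n * En n (\<lambda>s. f (snd s)))" for n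
    proof -
      have e: "pmf (poisson_pmf L) n = pois L n" using L by (simp add: pois_def)
      have a: "0 \<le> pois L n" using L by (simp add: pois_nonneg)
      have b: "0 \<le> En n (\<lambda>s. f (snd s))" by (rule En_nonneg) (rule f0)
      show ?thesis unfolding e by (rule ennreal_mult[OF a b, symmetric])
    qed
    then show ?thesis by (simp only: nn_integral_count_space_nat)
  qed
  also have "\<dots> = ennreal S"
    using Snn S unfolding L_def by (simp add: suminf_ennreal2 sums_summable sums_unique[symmetric])
  finally have nn: "(\<integral>\<^sup>+x. ennreal (f x) \<partial>mm1k_departures lam mu K t) = ennreal S" .
  have S0: "0 \<le> S" by (rule sums_le[OF _ sums_zero S]) (use Snn in \<open>simp add: L_def\<close>)
  show "integrable (measure_pmf (mm1k_departures lam mu K t)) f"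
    by (rule integrableI_nn_integral_finite[OF _ _ nn]) (auto simp: f0)
  show "measure_pmf.expectation (mm1k_departures lam mu K t) f = S"
    by (subst integral_eq_nn_integral) (auto simp: f0 nn S0)
qed

end


lemma exp_lim: "(k::real) > 0 \<Longrightarrow> ((\<lambda>t. C * exp (- (k * t))) \<longlongrightarrow> 0) at_top"
  by real_asymp

context mmh begin

definition "Cb = piE (\<lambda>x. \<bar>h' x\<bar>) * (2 * (\<Sum>z\<le>K. \<bar>h z\<bar>)) / \<gamma>"
definition "q0 = piE h' * piE h"
definition "Q n = R n - q0"

lemma Cb_nonneg: "0 \<le> Cb"
proof -
  have "0 \<le> piE (\<lambda>x. \<bar>h' x\<bar>)" unfolding piE_def using pi_nonneg by (simp add: sum_nonneg)
  moreover have "0 \<le> 2 * (\<Sum>z\<le>K. \<bar>h z\<bar>)" by (simp add: sum_nonneg)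
  ultimately show ?thesis unfolding Cb_def using gamma_bounds by simp
qed

lemma Q_bound: "\<bar>Q n\<bar> \<le> Cb * \<beta> ^ n"
  using R_bound[of n] unfolding Q_def q0_def Cb_def .

lemma sumQ:
  assumes L: "0 \<le> L"
  shows "summable (\<lambda>n. pois L n * Q n)"
    and "\<bar>\<Sum>n. pois L n * Q n\<bar> \<le> Cb * (exp (L * \<beta>) * exp (- L))"
proof -
  define b where "b n = Cb * (\<beta> ^ n * pois L n)" for n
  have bs: "b sums (Cb * (exp (L * \<beta>) * exp (- L)))" unfolding b_def by (rule sums_mult) (rule psb)
  have nb: "norm (pois L n * Q n) \<le> b n" for n
  proof -
    have "norm (pois L n * Q n) = pois L n * \<bar>Q n\<bar>" using pois_nonneg[OF L] by (simp add: abs_mult)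
    also have "\<dots> \<le> pois L n * (Cb * \<beta> ^ n)" by (rule mult_left_mono[OF Q_bound pois_nonneg[OF L]])
    finally show ?thesis by (simp add: b_def algebra_simps)
  qed
  show sm: "summable (\<lambda>n. pois L n * Q n)"
    by (rule summable_comparison_test'[OF sums_summable[OF bs]]) (rule nb)
  have smn: "summable (\<lambda>n. norm (pois L n * Q n))"
    by (rule summable_comparison_test'[OF sums_summable[OF bs]]) (use nb in simp)
  have "\<bar>\<Sum>n. pois L n * Q n\<bar> \<le> (\<Sum>n. norm (pois L n * Q n))"
    using summable_norm[OF smn] by simp
  also have "\<dots> \<le> (\<Sum>n. b n)" by (rule suminf_le[OF nb smn sums_summable[OF bs]])
  also have "\<dots> = Cb * (exp (L * \<beta>) * exp (- L))" using bs by (simp add: sums_iff)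
  finally show "\<bar>\<Sum>n. pois L n * Q n\<bar> \<le> Cb * (exp (L * \<beta>) * exp (- L))" .
qed

lemma var_formula:
  assumes t: "0 < t"
  shows "measure_pmf.variance (mm1k_departures lam mu K t) real =
     (lam + mu) * t * \<alpha> - 2 * (R 0 - q0) + 2 * (\<Sum>n. pois ((lam + mu) * t) n * Q n)"
proof -
  define L where "L = (lam + mu) * t"
  have L: "0 \<le> L" unfolding L_def using t lm_pos by simp
  define SQ where "SQ = (\<Sum>n. pois L n * Q n)"
  have S1: "(\<lambda>n. pois ((lam + mu) * t) n * En n (\<lambda>s. real (snd s))) sums (c * L)"
  proof -
    have "(\<lambda>n. c * (real n * pois L n)) sums (c * L)" by (rule sums_mult) (rule ps1)
    then show ?thesis unfolding L_def by (simp add: D_mean algebra_simps)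
  qed
  have S2: "(\<lambda>n. pois ((lam + mu) * t) n * En n (\<lambda>s. real (snd s) ^ 2)) sums
            (c ^ 2 * L ^ 2 + \<alpha> * L + (2 * q0 - 2 * R 0) * 1 + 2 * SQ)"
  proof -
    have a: "(\<lambda>n. c ^ 2 * (real n * (real n - 1) * pois L n)) sums (c ^ 2 * L ^ 2)" by (rule sums_mult) (rule ps2)
    have b: "(\<lambda>n. \<alpha> * (real n * pois L n)) sums (\<alpha> * L)" by (rule sums_mult) (rule ps1)
    have d: "(\<lambda>n. (2 * q0 - 2 * R 0) * pois L n) sums ((2 * q0 - 2 * R 0) * 1)" by (rule sums_mult) (rule ps0)
    have e: "(\<lambda>n. 2 * (pois L n * Q n)) sums (2 * SQ)"
      unfolding SQ_def by (rule sums_mult) (rule summable_sums[OF sumQ(1)[OF L]])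
    have "(\<lambda>n. c ^ 2 * (real n * (real n - 1) * pois L n) + \<alpha> * (real n * pois L n)
        + (2 * q0 - 2 * R 0) * pois L n + 2 * (pois L n * Q n)) sums
        (c ^ 2 * L ^ 2 + \<alpha> * L + (2 * q0 - 2 * R 0) * 1 + 2 * SQ)"
      by (intro sums_add a b d e)
    moreover have "(\<lambda>n. c ^ 2 * (real n * (real n - 1) * pois L n) + \<alpha> * (real n * pois L n)
        + (2 * q0 - 2 * R 0) * pois L n + 2 * (pois L n * Q n)) =
        (\<lambda>n. pois ((lam + mu) * t) n * En n (\<lambda>s. real (snd s) ^ 2))"
      unfolding L_def by (simp add: fun_eq_iff C_closed Q_def algebra_simps)
    ultimately show ?thesis by simp
  qed
  have i1: "integrable (measure_pmf (mm1k_departures lam mu K t)) real"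
    and e1: "measure_pmf.expectation (mm1k_departures lam mu K t) real = c * L"
    using dep_integral[OF t _ S1] by auto
  have i2: "integrable (measure_pmf (mm1k_departures lam mu K t)) (\<lambda>x. (real x) ^ 2)"
    and e2: "measure_pmf.expectation (mm1k_departures lam mu K t) (\<lambda>x. (real x) ^ 2) =
       c ^ 2 * L ^ 2 + \<alpha> * L + (2 * q0 - 2 * R 0) * 1 + 2 * SQ"
    using dep_integral[OF t _ S2] by auto
  have "measure_pmf.variance (mm1k_departures lam mu K t) real =
     measure_pmf.expectation (mm1k_departures lam mu K t) (\<lambda>x. (real x) ^ 2) -
     (measure_pmf.expectation (mm1k_departures lam mu K t) real) ^ 2"
    by (rule measure_pmf.variance_eq[OF i1 i2])
  also have "\<dots> = L * \<alpha> - 2 * (R 0 - q0) + 2 * SQ"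
    unfolding e1 e2 by (simp add: power2_eq_square algebra_simps)
  finally show ?thesis unfolding SQ_def L_def .
qed

lemma main_lim:
  "((\<lambda>t. measure_pmf.variance (mm1k_departures lam mu K t) real
     - ((lam + mu) * \<alpha> * t + (- 2 * (R 0 - q0)))) \<longlongrightarrow> 0) at_top"
proof (rule Lim_null_comparison)
  define k where "k = (lam + mu) * (1 - \<beta>)"
  have k: "0 < k" unfolding k_def using lm_pos beta_bounds by simp
  show "\<forall>\<^sub>F t in at_top. norm (measure_pmf.variance (mm1k_departures lam mu K t) real
     - ((lam + mu) * \<alpha> * t + (- 2 * (R 0 - q0)))) \<le> 2 * Cb * exp (- (k * t))"
    using eventually_gt_at_top[of 0]
  proof (rule eventually_mono)
    fix t :: real assume t: "0 < t"
    define L where "L = (lam + mu) * t"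
    have L: "0 \<le> L" unfolding L_def using t lm_pos by simp
    have "measure_pmf.variance (mm1k_departures lam mu K t) real
       - ((lam + mu) * \<alpha> * t + (- 2 * (R 0 - q0))) = 2 * (\<Sum>n. pois L n * Q n)"
      unfolding var_formula[OF t] L_def by (simp add: algebra_simps)
    moreover have "exp (L * \<beta>) * exp (- L) = exp (- (k * t))"
      unfolding mult_exp_exp L_def k_def by (simp add: algebra_simps)
    ultimately show "norm (measure_pmf.variance (mm1k_departures lam mu K t) real
       - ((lam + mu) * \<alpha> * t + (- 2 * (R 0 - q0)))) \<le> 2 * Cb * exp (- (k * t))"
      using sumQ(2)[OF L] by simp
  qed
  show "((\<lambda>t. 2 * Cb * exp (- (k * t))) \<longlongrightarrow> 0) at_top"
    by (rule exp_lim[OF k])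
qed

end


context mm begin

lemma piE_gmul: "piE (\<lambda>x. f x * g x) = qq * (piE f - \<pi> 0 * f 0)"
proof -
  have a: "piE (\<lambda>x. f x * g x) = (\<Sum>x<K. \<pi> (Suc x) * (f (Suc x) * qq))"
    unfolding piE_def by (subst sum_shift) (simp add: g_def)
  have b: "piE f = \<pi> 0 * f 0 + (\<Sum>x<K. \<pi> (Suc x) * f (Suc x))"
    unfolding piE_def by (rule sum_shift)
  show ?thesis unfolding a b by (simp add: sum_distrib_left algebra_simps)
qed

lemma c_eq: "c = qq * (1 - \<pi> 0)"
  using piE_gmul[of "\<lambda>_. 1"] by (simp add: c_def piE_const)

end

lemma sum_x: "(\<Sum>x\<le>n. real x) = real n * (real n + 1) / 2"
  by (induction n) (simp_all add: field_simps)

lemma sum_geo: "(1 - z) * (\<Sum>x\<le>n. (z::real) ^ x) = 1 - z ^ Suc n"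
proof (induction n)
  case 0 then show ?case by simp
next
  case (Suc n)
  have "(1 - z) * (\<Sum>x\<le>Suc n. z ^ x) = (1 - z) * (\<Sum>x\<le>n. z ^ x) + (1 - z) * z ^ Suc n"
    by (simp add: algebra_simps)
  also have "\<dots> = 1 - z ^ Suc n + (1 - z) * z ^ Suc n" by (simp only: Suc)
  also have "\<dots> = 1 - z ^ Suc (Suc n)" by (simp add: algebra_simps)
  finally show ?case .
qed

lemma sum_G1: "(1 - z) ^ 2 * (\<Sum>x\<le>n. real x * (z::real) ^ x) = z - (real n + 1) * z ^ (n + 1) + real n * z ^ (n + 2)"
proof (induction n)
  case 0 then show ?case by simp
next
  case (Suc n)
  have "(1 - z) ^ 2 * (\<Sum>x\<le>Suc n. real x * z ^ x) = (1 - z) ^ 2 * (\<Sum>x\<le>n. real x * z ^ x) + (1 - z) ^ 2 * (real n + 1) * z ^ (n + 1)"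
    by (simp add: algebra_simps)
  also have "\<dots> = z - (real n + 1) * z ^ (n + 1) + real n * z ^ (n + 2) + (1 - z) ^ 2 * (real n + 1) * z ^ (n + 1)"
    by (simp only: Suc)
  also have "\<dots> = z - (real (Suc n) + 1) * z ^ (Suc n + 1) + real (Suc n) * z ^ (Suc n + 2)"
    by (simp add: power_add eval_nat_numeral algebra_simps)
  finally show ?case .
qed

lemma sum_G2: "(1 - z) ^ 3 * (\<Sum>x\<le>n. real x ^ 2 * (z::real) ^ x) =
   z * (1 + z) - (real n + 1) ^ 2 * z ^ (n + 1) + (2 * real n ^ 2 + 2 * real n - 1) * z ^ (n + 2) - real n ^ 2 * z ^ (n + 3)"
proof (induction n)
  case 0 then show ?case by (simp add: power3_eq_cube power2_eq_square algebra_simps)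
next
  case (Suc n)
  have "(1 - z) ^ 3 * (\<Sum>x\<le>Suc n. real x ^ 2 * z ^ x) = (1 - z) ^ 3 * (\<Sum>x\<le>n. real x ^ 2 * z ^ x) + (1 - z) ^ 3 * (real n + 1) ^ 2 * z ^ (n + 1)"
    by (simp add: algebra_simps)
  also have "\<dots> = z * (1 + z) - (real n + 1) ^ 2 * z ^ (n + 1) + (2 * real n ^ 2 + 2 * real n - 1) * z ^ (n + 2) - real n ^ 2 * z ^ (n + 3)
      + (1 - z) ^ 3 * (real n + 1) ^ 2 * z ^ (n + 1)"
    by (simp only: Suc)
  also have "\<dots> = z * (1 + z) - (real (Suc n) + 1) ^ 2 * z ^ (Suc n + 1) + (2 * real (Suc n) ^ 2 + 2 * real (Suc n) - 1) * z ^ (Suc n + 2) - real (Suc n) ^ 2 * z ^ (Suc n + 3)"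
    by (simp add: power_add eval_nat_numeral algebra_simps)
  finally show ?case .
qed


lemma alg_h0: fixes u \<rho> r d w :: real
  assumes "d \<noteq> 0" "w \<noteq> 0" "u \<noteq> 0" "\<rho> \<noteq> 0" "d = 1 - \<rho>" "w = 1 - \<rho> * r" "u = 1 + \<rho>"
  shows "(0 - \<rho> * r / d) / w - (\<rho> / u * ((1 - r / d) / w) + 1 / u * ((0 - \<rho> * r / d) / w))
     = 0 - 1 / u * (1 - d / w)"
  using assms(1-4) by (simp add: field_simps) (use assms(5-7) in algebra)

lemma alg_hi: fixes u \<rho> \<sigma> r d w a e :: real
  assumes "d \<noteq> 0" "w \<noteq> 0" "u \<noteq> 0" "\<rho> * \<sigma> = 1" "d = 1 - \<rho>" "w = 1 - \<rho> * r" "u = 1 + \<rho>"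
  shows "(a - e) / w - (\<rho> / u * ((a + 1 - \<sigma> * e) / w) + 1 / u * ((a - 1 - \<rho> * e) / w))
     = 1 / u - 1 / u * (1 - d / w)"
  using assms(1-3) by (simp add: field_simps) (use assms(4-7) in algebra)

lemma alg_hK: fixes u \<rho> r d w k :: real
  assumes "d \<noteq> 0" "w \<noteq> 0" "u \<noteq> 0" "d = 1 - \<rho>" "w = 1 - \<rho> * r" "u = 1 + \<rho>"
  shows "(k - \<rho> / d) / w - (\<rho> / u * ((k - \<rho> / d) / w) + 1 / u * ((k - 1 - \<rho> * (\<rho> / d)) / w))
     = 1 / u - 1 / u * (1 - d / w)"
  using assms(1-3) by (simp add: field_simps) (use assms(4-6) in algebra)

lemma alg_h'0: fixes u \<rho> r d w :: real
  assumes "d \<noteq> 0" "w \<noteq> 0" "u \<noteq> 0" "\<rho> \<noteq> 0" "d = 1 - \<rho>" "w = 1 - \<rho> * r" "u = 1 + \<rho>"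
  shows "(0 - \<rho> * r / d) / w - (\<rho> / u * ((\<rho> * r - r / d) / w) + 1 / u * ((0 - \<rho> * r / d) / w))
     = \<rho> / u - 1 / u * (1 - d / w)"
  using assms(1-4) by (simp add: field_simps) (use assms(5-7) in algebra)

lemma alg_h'i: fixes u \<rho> \<sigma> r d w a e :: real
  assumes "d \<noteq> 0" "w \<noteq> 0" "u \<noteq> 0" "\<rho> * \<sigma> = 1" "d = 1 - \<rho>" "w = 1 - \<rho> * r" "u = 1 + \<rho>"
  shows "(a * (\<rho> * r) - e) / w - (\<rho> / u * (((a + 1) * (\<rho> * r) - \<sigma> * e) / w) + 1 / u * (((a - 1) * (\<rho> * r) - \<rho> * e) / w))
     = \<rho> / u - 1 / u * (1 - d / w)"
  using assms(1-3) by (simp add: field_simps) (use assms(4-7) in algebra)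

lemma alg_h'K: fixes u \<rho> r d w k :: real
  assumes "d \<noteq> 0" "w \<noteq> 0" "u \<noteq> 0" "d = 1 - \<rho>" "w = 1 - \<rho> * r" "u = 1 + \<rho>"
  shows "(k * (\<rho> * r) - \<rho> / d) / w - (\<rho> / u * ((k * (\<rho> * r) - \<rho> / d) / w) + 1 / u * (((k - 1) * (\<rho> * r) - \<rho> * (\<rho> / d)) / w))
     = 0 - 1 / u * (1 - d / w)"
  using assms(1-3) by (simp add: field_simps) (use assms(4-6) in algebra)

locale mm_ne = mm + assumes nr: "\<rho> \<noteq> 1"
begin

definition "r = \<rho> ^ K"
definition "D = 1 - \<rho>"
definition "W = 1 - \<rho> * r"
definition "\<sigma> = inverse \<rho>"
definition E :: "nat \<Rightarrow> real" where "E x = \<rho> * r * \<sigma> ^ x / D"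
definition hN :: "nat \<Rightarrow> real" where "hN x = (real x - E x) / W"
definition hN' :: "nat \<Rightarrow> real" where "hN' x = (real x * (\<rho> * r) - E x) / W"

lemma D_ne: "D \<noteq> 0" using nr by (simp add: D_def)
lemma W_ne: "W \<noteq> 0" using rhoK_ne1[OF nr] by (simp add: W_def r_def)
lemma rs: "\<rho> * \<sigma> = 1" using rho_pos by (simp add: \<sigma>_def)
lemma rs_pow: "\<rho> ^ x * \<sigma> ^ x = 1" by (metis power_mult_distrib power_one rs)
lemma pi_ne: "x \<le> K \<Longrightarrow> \<pi> x = D / W * \<rho> ^ x"
  using nr by (simp add: pi_def2 D_def W_def r_def)
lemma pi0: "\<pi> 0 = D / W" using pi_ne[of 0] by simp
lemma E_Suc: "E (Suc x) = \<sigma> * E x" by (simp add: E_def)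
lemma E_pred: "0 < x \<Longrightarrow> E (x - 1) = \<rho> * E x"
proof -
  assume "0 < x"
  then obtain y where "x = Suc y" by (cases x) auto
  then show ?thesis using rs by (simp add: E_def algebra_simps)
qed
lemma E_0: "E 0 = \<rho> * r / D" by (simp add: E_def)
lemma E_K: "E K = \<rho> / D"
proof -
  have "r * \<sigma> ^ K = 1" using rs_pow[of K] by (simp add: r_def)
  then show ?thesis by (simp add: E_def)
qed
lemma pE: "x \<le> K \<Longrightarrow> \<pi> x * E x = \<rho> * r / W"
proof -
  assume "x \<le> K"
  then have "\<pi> x * E x = (\<rho> ^ x * \<sigma> ^ x) * (\<rho> * r) / W" using D_ne by (simp add: pi_ne E_def)
  then show ?thesis by (simp add: rs_pow)
qed


lemma u_ne: "1 + \<rho> \<noteq> 0" using rho_pos by simp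
lemma rho_ne0: "\<rho> \<noteq> 0" using rho_pos by simp
lemma c_ne: "c = 1 / (1 + \<rho>) * (1 - D / W)" by (simp add: c_eq pi0 qq_eq)
lemma E_1: "E 1 = r / D"
proof -
  have "E 1 = \<sigma> * (\<rho> * r / D)" using E_Suc[of 0] by (simp add: E_0)
  also have "\<dots> = (\<rho> * \<sigma>) * r / D" by simp
  finally show ?thesis by (simp add: rs)
qed
lemma E_1s: "E (Suc 0) = r / D" using E_1 by simp
lemma E_pred_s: "0 < x \<Longrightarrow> E (x - Suc 0) = \<rho> * E x" using E_pred by simp
lemma P_0: "Pop f 0 = p * f 1 + qq * f 0" using K1 by (simp add: Pop_def up_def)
lemma P_i: "x < K \<Longrightarrow> Pop f x = p * f (Suc x) + qq * f (x - 1)" by (simp add: Pop_def up_def)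
lemma P_K: "Pop f K = p * f K + qq * f (K - 1)" by (simp add: Pop_def up_def)
lemma E_Km: "E (K - 1) = \<rho> * (\<rho> / D)" using E_pred[of K] K1 by (simp add: E_K)
lemma rK: "real (K - 1) = real K - 1" using K1 by (simp add: of_nat_diff)

lemma E_Km_s: "E (K - Suc 0) = \<rho> * (\<rho> / D)" using E_Km by simp
lemma rK_s: "real (K - Suc 0) = real K - 1" using rK by simp

lemma hN_P: assumes "x \<le> K" shows "hN x - Pop hN x = g x - c"
proof -
  consider "x = 0" | "0 < x" "x < K" | "x = K" using assms by linarith
  then show ?thesis
  proof cases
    case 1
    have h0: "hN 0 = (0 - \<rho> * r / D) / W" by (simp add: hN_def E_0)
    have h1: "hN 1 = (1 - r / D) / W" by (simp add: hN_def E_1s)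
    have "hN 0 - Pop hN 0 = 0 - c"
      unfolding P_0 h0 h1 p_eq qq_eq c_ne
      by (rule alg_h0[OF D_ne W_ne u_ne rho_ne0 D_def W_def refl])
    then show ?thesis using 1 by (simp add: g_def)
  next
    case 2
    have hs: "hN (Suc x) = (real x + 1 - \<sigma> * E x) / W" by (simp add: hN_def E_Suc)
    have hm: "hN (x - 1) = (real x - 1 - \<rho> * E x) / W" using 2 by (simp add: hN_def E_pred_s of_nat_diff)
    have hx: "hN x = (real x - E x) / W" by (simp add: hN_def)
    have "hN x - Pop hN x = 1 / (1 + \<rho>) - c"
      unfolding P_i[OF 2(2)] hs hm hx p_eq qq_eq c_ne
      by (rule alg_hi[OF D_ne W_ne u_ne rs D_def W_def refl])
    then show ?thesis using 2 by (simp add: g_def qq_eq)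
  next
    case 3
    have hK: "hN K = (real K - \<rho> / D) / W" by (simp add: hN_def E_K)
    have hm: "hN (K - 1) = (real K - 1 - \<rho> * (\<rho> / D)) / W" by (simp add: hN_def E_Km_s rK_s)
    have "hN K - Pop hN K = 1 / (1 + \<rho>) - c"
      unfolding P_K hK hm p_eq qq_eq c_ne
      by (rule alg_hK[OF D_ne W_ne u_ne D_def W_def refl])
    then show ?thesis using 3 K1 by (simp add: g_def qq_eq)
  qed
qed

lemma hN'_P: assumes "x \<le> K" shows "hN' x - Pop hN' x = g' x - c"
proof -
  consider "x = 0" | "0 < x" "x < K" | "x = K" using assms by linarith
  then show ?thesis
  proof cases
    case 1
    have h0: "hN' 0 = (0 - \<rho> * r / D) / W" by (simp add: hN'_def E_0)
    have h1: "hN' 1 = (\<rho> * r - r / D) / W" by (simp add: hN'_def E_1s)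
    have "hN' 0 - Pop hN' 0 = \<rho> / (1 + \<rho>) - c"
      unfolding P_0 h0 h1 p_eq qq_eq c_ne
      by (rule alg_h'0[OF D_ne W_ne u_ne rho_ne0 D_def W_def refl])
    then show ?thesis using 1 K1 by (simp add: g'_def p_eq)
  next
    case 2
    have hs: "hN' (Suc x) = ((real x + 1) * (\<rho> * r) - \<sigma> * E x) / W" by (simp add: hN'_def E_Suc)
    have hm: "hN' (x - 1) = ((real x - 1) * (\<rho> * r) - \<rho> * E x) / W" using 2 by (simp add: hN'_def E_pred_s of_nat_diff)
    have hx: "hN' x = (real x * (\<rho> * r) - E x) / W" by (simp add: hN'_def)
    have "hN' x - Pop hN' x = \<rho> / (1 + \<rho>) - c"
      unfolding P_i[OF 2(2)] hs hm hx p_eq qq_eq c_ne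
      by (rule alg_h'i[OF D_ne W_ne u_ne rs D_def W_def refl])
    then show ?thesis using 2 by (simp add: g'_def p_eq)
  next
    case 3
    have hK: "hN' K = (real K * (\<rho> * r) - \<rho> / D) / W" by (simp add: hN'_def E_K)
    have hm: "hN' (K - 1) = ((real K - 1) * (\<rho> * r) - \<rho> * (\<rho> / D)) / W" by (simp add: hN'_def E_Km_s rK_s)
    have "hN' K - Pop hN' K = 0 - c"
      unfolding P_K hK hm p_eq qq_eq c_ne
      by (rule alg_h'K[OF D_ne W_ne u_ne D_def W_def refl])
    then show ?thesis using 3 by (simp add: g'_def)
  qed
qed

end


lemma bbar_id:
  fixes \<rho> r k d w :: real
  assumes D: "d \<noteq> 0" and W: "w \<noteq> 0" and dd: "d = 1 - \<rho>" and ww: "w = 1 - \<rho> * r"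
  shows "-2 * ((\<rho>*r*(d / w * (\<rho> * (1 + \<rho> - (k+1)^2*r + (2*k^2+2*k-1)*\<rho>*r - k^2*\<rho>^2*r) / d^3)) - (1+\<rho>*r)*(\<rho>*r/w * (k*(k+1)/2)) + (\<rho>^2*r/d^2))/w^2 - ((\<rho>*r*(d / w * (\<rho> * (1 - (k+1)*r + k*\<rho>*r) / d^2)) - ((k+1)*(\<rho>*r)/w))/w) * (((d / w * (\<rho> * (1 - (k+1)*r + k*\<rho>*r) / d^2))-((k+1)*(\<rho>*r)/w))/w)) = \<rho>*r * ((6*(1+\<rho>^2)*(1+k)^2 - 4*\<rho>*(1+6*k+3*k^2))*(\<rho>*r) + \<rho>^2*(2+3*k+k^2)*(1+r^2) - 2*\<rho>*(3+2*k+k^2)*(1+\<rho>^2*r^2) + k*(1+k)*(1+\<rho>^4*r^2)) / (d^2 * w^4)"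
  using D W by (simp add: field_simps) (use dd ww in algebra)

lemma vbar_id:
  fixes \<rho> r k d w u mu :: real
  assumes D: "d \<noteq> 0" and W: "w \<noteq> 0" and U: "u \<noteq> 0" and dd: "d = 1 - \<rho>" and ww: "w = 1 - \<rho> * r" and uu: "u = 1 + \<rho>"
  shows "mu * u * (1/u*(1 - d/w) + 2 * (1/u * (((\<rho>*r*(d / w * (\<rho> * (1 - (k+1)*r + k*\<rho>*r) / d^2)) - ((k+1)*(\<rho>*r)/w))/w) - d/w * ((0 - \<rho>*r/d)/w))) - 2 * (1/u*(1 - d/w)) * ((\<rho>*r*(d / w * (\<rho> * (1 - (k+1)*r + k*\<rho>*r) / d^2)) - ((k+1)*(\<rho>*r)/w))/w)) = \<rho> * mu * ((1 + \<rho>*r) * (1 - (1 + 2*k) * r * d - \<rho>*r^2)) / w^3"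
  using D W U by (simp add: field_simps) (use dd ww uu in algebra)


sublocale mm_ne \<subseteq> NE: mmh lam mu K hN hN'
  by (rule mmh.intro[OF mm_axioms]) (unfold mmh_axioms_def, simp add: hN_P hN'_P)

context mm_ne begin

lemma rK1: "\<rho> ^ (K + 1) = \<rho> * r" by (simp add: r_def)
lemma rK2: "\<rho> ^ (K + 2) = \<rho> ^ 2 * r" by (simp add: r_def power_add power2_eq_square mult.commute)
lemma r_pos: "0 < r" using rho_pos by (simp add: r_def)
lemma rK3: "\<rho> ^ (K + 3) = \<rho> ^ 3 * r" by (simp add: r_def power_add)

lemma S1: "(\<Sum>x\<le>K. real x * \<rho> ^ x) = \<rho> * (1 - (real K + 1) * r + real K * \<rho> * r) / D ^ 2"
proof -
  have "D ^ 2 * (\<Sum>x\<le>K. real x * \<rho> ^ x) = \<rho> - (real K + 1) * (\<rho> * r) + real K * (\<rho> ^ 2 * r)"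
    using sum_G1[of \<rho> K] unfolding D_def rK1 rK2 .
  then show ?thesis using D_ne by (simp add: field_simps power2_eq_square)
qed

lemma S2: "(\<Sum>x\<le>K. real x ^ 2 * \<rho> ^ x) = \<rho> * (1 + \<rho> - (real K + 1) ^ 2 * r + (2 * real K ^ 2 + 2 * real K - 1) * \<rho> * r - real K ^ 2 * \<rho> ^ 2 * r) / D ^ 3"
proof -
  have "D ^ 3 * (\<Sum>x\<le>K. real x ^ 2 * \<rho> ^ x) = \<rho> * (1 + \<rho>) - (real K + 1) ^ 2 * (\<rho> * r) + (2 * real K ^ 2 + 2 * real K - 1) * (\<rho> ^ 2 * r) - real K ^ 2 * (\<rho> ^ 3 * r)"
    using sum_G2[of \<rho> K] unfolding D_def rK1 rK2 rK3 .
  then show ?thesis using D_ne by (simp add: field_simps power2_eq_square power3_eq_cube)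
qed

lemma Ssig: "D * r * (\<Sum>x\<le>K. \<sigma> ^ x) = W"
proof -
  have a: "(1 - \<sigma>) * (\<Sum>x\<le>K. \<sigma> ^ x) = 1 - \<sigma> ^ Suc K" by (rule sum_geo)
  have b: "r * \<sigma> ^ K = 1" using rs_pow[of K] by (simp add: r_def)
  have "D * r * (\<Sum>x\<le>K. \<sigma> ^ x) = - (\<rho> * r) * ((1 - \<sigma>) * (\<Sum>x\<le>K. \<sigma> ^ x)) + r * (1 - \<rho> * \<sigma>) * (\<Sum>x\<le>K. \<sigma> ^ x)"
    by (simp add: D_def algebra_simps)
  also have "\<dots> = - (\<rho> * r) * (1 - \<sigma> * \<sigma> ^ K)"
  proof -
    have z: "1 - \<rho> * \<sigma> = 0" using rs by simp
    show ?thesis unfolding a z by simp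
  qed
  also have "\<dots> = W" using b rs by (simp add: W_def algebra_simps)
  finally show ?thesis .
qed

lemma m1: "piE real = D / W * (\<rho> * (1 - (real K + 1) * r + real K * \<rho> * r) / D ^ 2)"
proof -
  have "piE real = (\<Sum>x\<le>K. D / W * (real x * \<rho> ^ x))"
    unfolding piE_def by (intro sum.cong refl) (simp add: pi_ne)
  then show ?thesis by (simp only: sum_distrib_left[symmetric] S1)
qed

lemma m2: "piE (\<lambda>x. real x ^ 2) = D / W * (\<rho> * (1 + \<rho> - (real K + 1) ^ 2 * r + (2 * real K ^ 2 + 2 * real K - 1) * \<rho> * r - real K ^ 2 * \<rho> ^ 2 * r) / D ^ 3)"
proof -
  have "piE (\<lambda>x. real x ^ 2) = (\<Sum>x\<le>K. D / W * (real x ^ 2 * \<rho> ^ x))"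
    unfolding piE_def by (intro sum.cong refl) (simp add: pi_ne)
  then show ?thesis by (simp only: sum_distrib_left[symmetric] S2)
qed

lemma e1: "piE E = (real K + 1) * (\<rho> * r) / W"
proof -
  have "piE E = (\<Sum>x\<le>K. \<rho> * r / W)" unfolding piE_def by (intro sum.cong refl) (simp add: pE)
  then show ?thesis by simp
qed

lemma xe: "piE (\<lambda>x. real x * E x) = \<rho> * r / W * (real K * (real K + 1) / 2)"
proof -
  have "piE (\<lambda>x. real x * E x) = (\<Sum>x\<le>K. \<rho> * r / W * real x)"
    unfolding piE_def by (intro sum.cong refl) (simp add: pE[symmetric] algebra_simps)
  then show ?thesis by (simp only: sum_distrib_left[symmetric] sum_x)
qed

lemma ee: "piE (\<lambda>x. E x ^ 2) = \<rho> ^ 2 * r / D ^ 2"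
proof -
  have "piE (\<lambda>x. E x ^ 2) = (\<Sum>x\<le>K. \<rho> * r / W * E x)"
    unfolding piE_def by (intro sum.cong refl) (simp add: pE[symmetric] power2_eq_square algebra_simps)
  also have "\<dots> = \<rho> * r / W * (\<rho> * r / D) * (\<Sum>x\<le>K. \<sigma> ^ x)"
    by (simp add: E_def sum_distrib_left[symmetric] sum_divide_distrib[symmetric] algebra_simps)
  also have "\<dots> = \<rho> * r / W * (\<rho> / D) / D * (D * r * (\<Sum>x\<le>K. \<sigma> ^ x))"
    using D_ne W_ne r_pos by (simp add: field_simps)
  also have "\<dots> = \<rho> ^ 2 * r / D ^ 2" unfolding Ssig using W_ne rho_pos by (simp add: r_def power2_eq_square)
  finally show ?thesis .
qed


lemma piE_hN: "piE hN = (piE real - piE E) / W"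
proof -
  have "piE hN = piE (\<lambda>x. (1 / W) * real x - (1 / W) * E x)" by (rule piE_cong) (simp add: hN_def diff_divide_distrib)
  also have "\<dots> = (1 / W) * piE real - (1 / W) * piE E" by (simp only: piE_diff piE_cmult)
  finally show ?thesis by (simp add: diff_divide_distrib)
qed

lemma piE_hN': "piE hN' = (\<rho> * r * piE real - piE E) / W"
proof -
  have "piE hN' = piE (\<lambda>x. (1 / W * (\<rho> * r)) * real x - (1 / W) * E x)" by (rule piE_cong) (simp add: hN'_def diff_divide_distrib mult.commute)
  also have "\<dots> = (1 / W * (\<rho> * r)) * piE real - (1 / W) * piE E" by (simp only: piE_diff piE_cmult)
  finally show ?thesis by (simp add: diff_divide_distrib)
qed

lemma piE_hh: "piE (\<lambda>x. hN' x * hN x) =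
  (\<rho> * r * piE (\<lambda>x. real x ^ 2) - (1 + \<rho> * r) * piE (\<lambda>x. real x * E x) + piE (\<lambda>x. E x ^ 2)) / W ^ 2"
proof -
  have "piE (\<lambda>x. hN' x * hN x) = piE (\<lambda>x. (1 / W ^ 2) * ((\<rho> * r) * real x ^ 2)
       - (1 / W ^ 2) * ((1 + \<rho> * r) * (real x * E x)) + (1 / W ^ 2) * E x ^ 2)"
    by (rule piE_cong) (simp add: hN'_def hN_def power2_eq_square field_simps W_ne)
  also have "\<dots> = (1 / W ^ 2) * ((\<rho> * r) * piE (\<lambda>x. real x ^ 2)) - (1 / W ^ 2) * ((1 + \<rho> * r) * piE (\<lambda>x. real x * E x))
     + (1 / W ^ 2) * piE (\<lambda>x. E x ^ 2)"
    by (simp only: piE_add piE_diff piE_cmult)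
  finally show ?thesis by (simp add: add_divide_distrib diff_divide_distrib)
qed

lemma hN'0: "hN' 0 = (0 - \<rho> * r / D) / W" by (simp add: hN'_def E_0)

lemma p2K: "\<rho> ^ (2 * K) = r ^ 2"
proof -
  have "\<rho> ^ (2 * K) = \<rho> ^ (K * 2)" by (simp add: mult.commute)
  also have "\<dots> = (\<rho> ^ K) ^ 2" by (rule power_mult)
  finally show ?thesis by (simp only: r_def)
qed
lemma p2K1: "\<rho> ^ (2 * (K + 1)) = \<rho> ^ 2 * r ^ 2"
proof -
  have "2 * (K + 1) = 2 * K + 2" by simp
  then have "\<rho> ^ (2 * (K + 1)) = \<rho> ^ (2 * K) * \<rho> ^ 2" by (simp only: power_add)
  also have "\<dots> = r ^ 2 * \<rho> ^ 2" by (simp only: p2K)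
  finally show ?thesis by (simp only: mult.commute)
qed
lemma p2K2: "\<rho> ^ (2 * (K + 2)) = \<rho> ^ 4 * r ^ 2"
proof -
  have "2 * (K + 2) = 2 * K + 4" by simp
  then have "\<rho> ^ (2 * (K + 2)) = \<rho> ^ (2 * K) * \<rho> ^ 4" by (simp only: power_add)
  also have "\<dots> = r ^ 2 * \<rho> ^ 4" by (simp only: p2K)
  finally show ?thesis by (simp only: mult.commute)
qed
lemma p2K1': "\<rho> ^ (2 * K + 1) = \<rho> * r ^ 2"
proof -
  have "\<rho> ^ (2 * K + 1) = \<rho> ^ (2 * K) * \<rho>" by (simp only: power_add power_one_right)
  also have "\<dots> = r ^ 2 * \<rho>" by (simp only: p2K)
  finally show ?thesis by (simp only: mult.commute)
qed

lemma be_eq: "-2 * (NE.R 0 - NE.q0) = mm1k_be lam mu K"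
proof -
  have "-2 * (NE.R 0 - NE.q0) = -2 * ((\<rho> * r * piE (\<lambda>x. real x ^ 2) - (1 + \<rho> * r) * piE (\<lambda>x. real x * E x) + piE (\<lambda>x. E x ^ 2)) / W ^ 2
      - ((\<rho> * r * piE real - piE E) / W) * ((piE real - piE E) / W))"
    by (simp add: NE.R_def NE.q0_def piE_hh piE_hN piE_hN')
  also have "\<dots> = \<rho> * r * ((6 * (1 + \<rho> ^ 2) * (1 + real K) ^ 2 - 4 * \<rho> * (1 + 6 * real K + 3 * real K ^ 2)) * (\<rho> * r)
      + \<rho> ^ 2 * (2 + 3 * real K + real K ^ 2) * (1 + r ^ 2) - 2 * \<rho> * (3 + 2 * real K + real K ^ 2) * (1 + \<rho> ^ 2 * r ^ 2)
      + real K * (1 + real K) * (1 + \<rho> ^ 4 * r ^ 2)) / (D ^ 2 * W ^ 4)"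
    unfolding m1 m2 e1 xe ee by (rule bbar_id[OF D_ne W_ne D_def W_def])
  also have "\<dots> = mm1k_be lam mu K"
    unfolding mm1k_be_def mm1k_N_def Let_def \<rho>_def[symmetric] if_P[OF nr] rK1 p2K p2K1 p2K2 D_def W_def
    by (rule refl)
  finally show ?thesis .
qed

lemma vbar_eq: "(lam + mu) * NE.\<alpha> = mm1k_vbar lam mu K"
proof -
  have lm: "lam + mu = mu * (1 + \<rho>)" using mu by (simp add: one_rho)
  have "(lam + mu) * NE.\<alpha> = mu * (1 + \<rho>) * (1 / (1 + \<rho>) * (1 - D / W) + 2 * (1 / (1 + \<rho>) * ((\<rho> * r * piE real - piE E) / W - D / W * ((0 - \<rho> * r / D) / W)))
      - 2 * (1 / (1 + \<rho>) * (1 - D / W)) * ((\<rho> * r * piE real - piE E) / W))"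
    unfolding NE.\<alpha>_def lm piE_gmul c_ne pi0 hN'0 piE_hN' qq_eq by simp
  also have "\<dots> = \<rho> * mu * ((1 + \<rho> * r) * (1 - (1 + 2 * real K) * r * D - \<rho> * r ^ 2)) / W ^ 3"
    unfolding m1 e1 by (rule vbar_id[OF D_ne W_ne u_ne D_def W_def refl])
  also have "\<dots> = mm1k_vbar lam mu K"
  proof -
    have l: "\<rho> * mu = lam" using mu by (simp add: \<rho>_def)
    show ?thesis
      unfolding mm1k_vbar_def Let_def \<rho>_def[symmetric] if_P[OF nr] rK1 p2K1' r_def[symmetric] D_def W_def l
      by (rule refl)
  qed
  finally show ?thesis .
qed

lemma lim_ne: "((\<lambda>t. measure_pmf.variance (mm1k_departures lam mu K t) real
     - (mm1k_vbar lam mu K * t + mm1k_be lam mu K)) \<longlongrightarrow> 0) at_top"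
  using NE.main_lim unfolding vbar_eq[symmetric] be_eq[symmetric] by simp

end


lemma sum_x2: "(\<Sum>x\<le>n. real x ^ 2) = real n * (real n + 1) * (2 * real n + 1) / 6"
  by (induction n) (simp_all add: field_simps power2_eq_square)
lemma sum_x3: "(\<Sum>x\<le>n. real x ^ 3) = (real n * (real n + 1) / 2) ^ 2"
  by (induction n) (simp_all add: field_simps power2_eq_square power3_eq_cube)
lemma sum_x4: "(\<Sum>x\<le>n. real x ^ 4) = real n * (real n + 1) * (2 * real n + 1) * (3 * real n ^ 2 + 3 * real n - 1) / 30"
  by (induction n) (simp_all add: field_simps power2_eq_square power3_eq_cube eval_nat_numeral)

lemma alg1_0: fixes k u :: real assumes "u \<noteq> 0" "u = k + 1"
  shows "0 * (2 * k + 1 - 0) / (2 * u) - (1 / 2 * (1 * (2 * k + 1 - 1) / (2 * u)) + 1 / 2 * (0 * (2 * k + 1 - 0) / (2 * u)))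
    = 0 - 1 / 2 * (1 - 1 / u)"
  using assms(1) by (simp add: field_simps) (use assms(2) in algebra)
lemma alg1_i: fixes k u a :: real assumes "u \<noteq> 0" "u = k + 1"
  shows "a * (2 * k + 1 - a) / (2 * u) - (1 / 2 * ((a + 1) * (2 * k + 1 - (a + 1)) / (2 * u)) + 1 / 2 * ((a - 1) * (2 * k + 1 - (a - 1)) / (2 * u)))
    = 1 / 2 - 1 / 2 * (1 - 1 / u)"
  using assms(1) by (simp add: field_simps)
lemma alg1_K: fixes k u :: real assumes "u \<noteq> 0" "u = k + 1"
  shows "k * (2 * k + 1 - k) / (2 * u) - (1 / 2 * (k * (2 * k + 1 - k) / (2 * u)) + 1 / 2 * ((k - 1) * (2 * k + 1 - (k - 1)) / (2 * u)))
    = 1 / 2 - 1 / 2 * (1 - 1 / u)"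
  using assms(1) by (simp add: field_simps)
lemma alg1'_0: fixes k u :: real assumes "u \<noteq> 0" "u = k + 1"
  shows "- (0 * (0 + 1)) / (2 * u) - (1 / 2 * (- (1 * (1 + 1)) / (2 * u)) + 1 / 2 * (- (0 * (0 + 1)) / (2 * u)))
    = 1 / 2 - 1 / 2 * (1 - 1 / u)"
  using assms by (simp add: field_simps)
lemma alg1'_i: fixes k u a :: real assumes "u \<noteq> 0" "u = k + 1"
  shows "- (a * (a + 1)) / (2 * u) - (1 / 2 * (- ((a + 1) * (a + 1 + 1)) / (2 * u)) + 1 / 2 * (- ((a - 1) * (a - 1 + 1)) / (2 * u)))
    = 1 / 2 - 1 / 2 * (1 - 1 / u)"
  using assms(1) by (simp add: field_simps)
lemma alg1'_K: fixes k u :: real assumes "u \<noteq> 0" "u = k + 1"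
  shows "- (k * (k + 1)) / (2 * u) - (1 / 2 * (- (k * (k + 1)) / (2 * u)) + 1 / 2 * (- ((k - 1) * (k - 1 + 1)) / (2 * u)))
    = 0 - 1 / 2 * (1 - 1 / u)"
  using assms(1) by (simp add: field_simps) (use assms(2) in algebra)

lemma lin_aux: fixes a k :: real assumes "k + 1 \<noteq> 0"
  shows "a * (2 * k + 1 - a) / (2 * (k + 1)) = (2 * k + 1) / (2 * (k + 1)) * a + - 1 / (2 * (k + 1)) * a ^ 2"
proof -
  define u where "u = k + 1"
  have "u \<noteq> 0" using assms u_def by simp
  then have "a * (2 * k + 1 - a) / (2 * u) = (2 * k + 1) / (2 * u) * a + - 1 / (2 * u) * a ^ 2"
    by (simp add: field_simps power2_eq_square)
  then show ?thesis unfolding u_def .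
qed
lemma lin_aux': fixes a k :: real assumes "k + 1 \<noteq> 0"
  shows "- (a * (a + 1)) / (2 * (k + 1)) = - 1 / (2 * (k + 1)) * a + - 1 / (2 * (k + 1)) * a ^ 2"
proof -
  define u where "u = k + 1"
  have "u \<noteq> 0" using assms u_def by simp
  then have "- (a * (a + 1)) / (2 * u) = - 1 / (2 * u) * a + - 1 / (2 * u) * a ^ 2"
    by (simp add: field_simps power2_eq_square)
  then show ?thesis unfolding u_def .
qed

lemma be1_id: fixes k u :: real assumes "u \<noteq> 0" "u = k + 1"
  shows "-2 * (((- 1 / (2 * u)) * ((2 * k + 1) / (2 * u))) * (k * u * (2 * k + 1) / 6 / u) + ((- 1 / (2 * u)) * ((2 * k + 1) / (2 * u)) + (- 1 / (2 * u)) * (- 1 / (2 * u))) * ((k * u / 2) ^ 2 / u) + ((- 1 / (2 * u)) * (- 1 / (2 * u))) * (k * u * (2 * k + 1) * (3 * k ^ 2 + 3 * k - 1) / 30 / u) - ((- 1 / (2 * u)) * (k * u / 2 / u) + (- 1 / (2 * u)) * (k * u * (2 * k + 1) / 6 / u)) * (((2 * k + 1) / (2 * u)) * (k * u / 2 / u) + (- 1 / (2 * u)) * (k * u * (2 * k + 1) / 6 / u))) = (7 * (k)^4 + 28 * (k)^3 + 37 * (k)^2 + 18 * k) / (180 * u^2)"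
  using assms(1) by (simp add: field_simps; (use assms(2) in algebra))

lemma vbar1_id: fixes k u lam :: real assumes "u \<noteq> 0" "u = k + 1"
  shows "2 * lam * (1 / 2 * (1 - 1 / u) + 2 * (1 / 2 * ((- 1 / (2 * u)) * (k * u / 2 / u) + (- 1 / (2 * u)) * (k * u * (2 * k + 1) / 6 / u))) - 2 * (1 / 2 * (1 - 1 / u)) * ((- 1 / (2 * u)) * (k * u / 2 / u) + (- 1 / (2 * u)) * (k * u * (2 * k + 1) / 6 / u))) = lam * (2 / 3 - (3 * k + 2) / (3 * u ^ 2))"
  using assms(1) by (simp add: field_simps; (use assms(2) in algebra))

locale mm_one = mm + assumes one: "\<rho> = 1"
begin

definition h1 :: "nat \<Rightarrow> real" where "h1 x = real x * (2 * real K + 1 - real x) / (2 * (real K + 1))"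
definition h1' :: "nat \<Rightarrow> real" where "h1' x = - (real x * (real x + 1)) / (2 * (real K + 1))"

lemma Kp_ne: "real K + 1 \<noteq> 0" by simp
lemma p_h: "p = 1 / 2" using one by (simp add: p_eq)
lemma qq_h: "qq = 1 / 2" using one by (simp add: qq_eq)
lemma pi1: "x \<le> K \<Longrightarrow> \<pi> x = 1 / (real K + 1)" using one by (simp add: pi_def2)
lemma c1: "c = 1 / 2 * (1 - 1 / (real K + 1))" using pi1[of 0] by (simp add: c_eq qq_h)

lemma P_0: "Pop f 0 = p * f 1 + qq * f 0" using K1 by (simp add: Pop_def up_def)
lemma P_i: "x < K \<Longrightarrow> Pop f x = p * f (Suc x) + qq * f (x - 1)" by (simp add: Pop_def up_def)
lemma P_K: "Pop f K = p * f K + qq * f (K - 1)" by (simp add: Pop_def up_def)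
lemma rK: "real (K - 1) = real K - 1" using K1 by (simp add: of_nat_diff)

lemma h1_P: assumes "x \<le> K" shows "h1 x - Pop h1 x = g x - c"
proof -
  consider "x = 0" | "0 < x" "x < K" | "x = K" using assms by linarith
  then show ?thesis
  proof cases
    case 1
    have "h1 0 - Pop h1 0 = 0 - c"
      unfolding P_0 h1_def p_h qq_h c1 by (simp only: of_nat_0 of_nat_1) (rule alg1_0[OF Kp_ne refl])
    then show ?thesis using 1 by (simp add: g_def)
  next
    case 2
    have rx: "real (x - 1) = real x - 1" using 2 by (simp add: of_nat_diff)
    have "h1 x - Pop h1 x = 1 / 2 - c"
      unfolding P_i[OF 2(2)] h1_def p_h qq_h c1 of_nat_Suc rx
      by (simp only: of_nat_1 add.commute[of 1 "real x"]) (rule alg1_i[OF Kp_ne refl])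
    then show ?thesis using 2 by (simp add: g_def qq_h)
  next
    case 3
    have "h1 K - Pop h1 K = 1 / 2 - c"
      unfolding P_K h1_def p_h qq_h c1 rK by (rule alg1_K[OF Kp_ne refl])
    then show ?thesis using 3 K1 by (simp add: g_def qq_h)
  qed
qed

lemma h1'_P: assumes "x \<le> K" shows "h1' x - Pop h1' x = g' x - c"
proof -
  consider "x = 0" | "0 < x" "x < K" | "x = K" using assms by linarith
  then show ?thesis
  proof cases
    case 1
    have "h1' 0 - Pop h1' 0 = 1 / 2 - c"
      unfolding P_0 h1'_def p_h qq_h c1 by (simp only: of_nat_0 of_nat_1) (rule alg1'_0[OF Kp_ne refl])
    then show ?thesis using 1 K1 by (simp add: g'_def p_h)
  next
    case 2
    have rx: "real (x - 1) = real x - 1" using 2 by (simp add: of_nat_diff)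
    have "h1' x - Pop h1' x = 1 / 2 - c"
      unfolding P_i[OF 2(2)] h1'_def p_h qq_h c1 of_nat_Suc rx
      by (simp only: of_nat_1 add.commute[of 1 "real x"]) (rule alg1'_i[OF Kp_ne refl])
    then show ?thesis using 2 by (simp add: g'_def p_h)
  next
    case 3
    have "h1' K - Pop h1' K = 0 - c"
      unfolding P_K h1'_def p_h qq_h c1 rK by (rule alg1'_K[OF Kp_ne refl])
    then show ?thesis using 3 by (simp add: g'_def)
  qed
qed


end

sublocale mm_one \<subseteq> ON: mmh lam mu K h1 h1'
  by (rule mmh.intro[OF mm_axioms]) (unfold mmh_axioms_def, simp add: h1_P h1'_P)

context mm_one begin

lemma piE_u: "piE f = (\<Sum>x\<le>K. f x) / (real K + 1)"
proof -
  have "piE f = (\<Sum>x\<le>K. 1 / (real K + 1) * f x)" unfolding piE_def by (intro sum.cong refl) (simp add: pi1)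
  then show ?thesis by (simp add: sum_divide_distrib)
qed

definition "A1 = (2 * real K + 1) / (2 * (real K + 1))"
definition "B1 = - 1 / (2 * (real K + 1))"

lemma h1_lin: "h1 x = A1 * real x + B1 * real x ^ 2"
  unfolding h1_def A1_def B1_def by (rule lin_aux[OF Kp_ne])
lemma h1'_lin: "h1' x = B1 * real x + B1 * real x ^ 2"
  unfolding h1'_def B1_def by (rule lin_aux'[OF Kp_ne])
lemma hh_lin: "h1' x * h1 x = (B1 * A1) * real x ^ 2 + (B1 * A1 + B1 * B1) * real x ^ 3 + (B1 * B1) * real x ^ 4"
  unfolding h1_lin h1'_lin by (simp add: algebra_simps power2_eq_square power3_eq_cube eval_nat_numeral)

lemma M1: "piE real = real K * (real K + 1) / 2 / (real K + 1)" by (simp add: piE_u sum_x)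
lemma M2: "piE (\<lambda>x. real x ^ 2) = real K * (real K + 1) * (2 * real K + 1) / 6 / (real K + 1)" by (simp only: piE_u sum_x2)
lemma M3: "piE (\<lambda>x. real x ^ 3) = (real K * (real K + 1) / 2) ^ 2 / (real K + 1)" by (simp only: piE_u sum_x3)
lemma M4: "piE (\<lambda>x. real x ^ 4) = real K * (real K + 1) * (2 * real K + 1) * (3 * real K ^ 2 + 3 * real K - 1) / 30 / (real K + 1)" by (simp only: piE_u sum_x4)

lemma piE_h1: "piE h1 = A1 * piE real + B1 * piE (\<lambda>x. real x ^ 2)"
  unfolding h1_lin by (simp only: piE_add piE_cmult)
lemma piE_h1': "piE h1' = B1 * piE real + B1 * piE (\<lambda>x. real x ^ 2)"
  unfolding h1'_lin by (simp only: piE_add piE_cmult)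
lemma piE_hh1: "piE (\<lambda>x. h1' x * h1 x) = (B1 * A1) * piE (\<lambda>x. real x ^ 2) + (B1 * A1 + B1 * B1) * piE (\<lambda>x. real x ^ 3) + (B1 * B1) * piE (\<lambda>x. real x ^ 4)"
  unfolding hh_lin by (simp only: piE_add piE_cmult)

lemma be1: "-2 * (ON.R 0 - ON.q0) = mm1k_be lam mu K"
proof -
  have "-2 * (ON.R 0 - ON.q0) = -2 * ((B1 * A1) * piE (\<lambda>x. real x ^ 2) + (B1 * A1 + B1 * B1) * piE (\<lambda>x. real x ^ 3) + (B1 * B1) * piE (\<lambda>x. real x ^ 4)
     - (B1 * piE real + B1 * piE (\<lambda>x. real x ^ 2)) * (A1 * piE real + B1 * piE (\<lambda>x. real x ^ 2)))"
    by (simp add: ON.R_def ON.q0_def piE_hh1 piE_h1 piE_h1')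
  also have "\<dots> = (7 * (real K)^4 + 28 * (real K)^3 + 37 * (real K)^2 + 18 * real K) / (180 * (real K + 1)^2)"
    unfolding M1 M2 M3 M4 A1_def B1_def by (rule be1_id[OF Kp_ne refl])
  also have "\<dots> = mm1k_be lam mu K"
    unfolding mm1k_be_def Let_def \<rho>_def[symmetric] one by simp
  finally show ?thesis .
qed

lemma vbar1: "(lam + mu) * ON.\<alpha> = mm1k_vbar lam mu K"
proof -
  have lm: "lam + mu = 2 * lam" using one mu by (simp add: \<rho>_def)
  have h0: "h1' 0 = 0" by (simp add: h1'_def)
  have "(lam + mu) * ON.\<alpha> = 2 * lam * (1 / 2 * (1 - 1 / (real K + 1)) + 2 * (1 / 2 * (B1 * piE real + B1 * piE (\<lambda>x. real x ^ 2)))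
     - 2 * (1 / 2 * (1 - 1 / (real K + 1))) * (B1 * piE real + B1 * piE (\<lambda>x. real x ^ 2)))"
    unfolding ON.\<alpha>_def piE_gmul h0 c1 qq_h piE_h1' lm by simp
  also have "\<dots> = lam * (2 / 3 - (3 * real K + 2) / (3 * (real K + 1) ^ 2))"
    unfolding M1 M2 B1_def by (rule vbar1_id[OF Kp_ne refl])
  also have "\<dots> = mm1k_vbar lam mu K"
    unfolding mm1k_vbar_def Let_def \<rho>_def[symmetric] one by simp
  finally show ?thesis .
qed

lemma lim_one: "((\<lambda>t. measure_pmf.variance (mm1k_departures lam mu K t) real
     - (mm1k_vbar lam mu K * t + mm1k_be lam mu K)) \<longlongrightarrow> 0) at_top"
  using ON.main_lim unfolding vbar1[symmetric] be1[symmetric] by simp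

end

theorem proposition1:
  fixes lam mu :: real and K :: nat
  assumes "0 < lam" and "0 < mu" and "1 \<le> K"
  shows "((\<lambda>t. measure_pmf.variance (mm1k_departures lam mu K t) real
               - (mm1k_vbar lam mu K * t + mm1k_be lam mu K)) \<longlongrightarrow> 0) at_top"
proof -
  interpret mm lam mu K using assms by unfold_locales
  show ?thesis
  proof (cases "\<rho> = 1")
    case True
    interpret mm_one lam mu K by unfold_locales (rule True)
    show ?thesis by (rule lim_one)
  next
    case False
    interpret mm_ne lam mu K by unfold_locales (rule False)
    show ?thesis by (rule lim_ne)
  qed
qed


end
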